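(* Let $R$ be a ring. Then: \begin{enumerate} \item $\mathbb{L}\mathrm{Ore}_l(R)\subseteq {}'\mathbb{L}_l(R)\subseteq\mathbb{L}^p_l(R)$ and $\mathbb{L}\mathrm{Ore}_l(R)={}'\mathbb{L}_l(R)\cap\mathrm{Ore}_l(R)=\mathbb{L}^p_l(R)\cap\mathrm{Ore}_l(R)$. \item $\mathbb{L}\mathrm{Ore}_r(R)\subseteq \mathbb{L}'_r(R)\subseteq\mathbb{L}^p_r(R)$ and $\mathbb{L}\mathrm{Ore}_r(R)=\mathbb{L}'_r(R)\cap\mathrm{Ore}_r(R)=\mathbb{L}^p_r(R)\cap\mathrm{Ore}_r(R)$. \item $\mathrm{Ore}(R)\subseteq {}'\mathbb{L}'_{l,r}(R)\subseteq\mathbb{L}^p(R)$. \end{enumerate}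
   Context: Rings are associative with $1$. A multiplicative set $S\subseteq R$: $SS\subseteq S$, $1\in S$, $0\notin S$. $R\langle S^{-1}\rangle=R\langle X_S\rangle/I_S$ ($R\langle X_S\rangle$ freely generated by $R$ and noncommuting $x_s$, $s\in S$; $I_S$ generated by $sx_s-1,x_ss-1$); $\mathrm{ass}_R(S)=\ker(R\to R\langle S^{-1}\rangle)$. $S$ is left (resp. right) localizable if $R\langle S^{-1}\rangle\neq0$ and every element is of the form $(x_s+I_S)(r+I_S)$ (resp. $(r+I_S)(x_s+I_S)$), $s\in S,r\in R$; localizable if both; these sets are $\mathbb{L}_l(R),\mathbb{L}_r(R),\mathbb{L}(R)$. For a ring $A$, ${}'\mathcal{C}_A=\{r:xr=0\Rightarrow x=0\}$, $\mathcal{C}'_A=\{r:rx=0\Rightarrow x=0\}$, $\mathcal{C}_A={}'\mathcal{C}_A\cap\mathcal{C}'_A$. For a multiplicative set $S$: $\mathfrak{a}(S)$ (resp. ${}'\mathfrak{a}(S)$, $\mathfrak{a}'(S)$) is the least ideal $\mathfrak{b}$ of $R$ with image of $S$ in $R/\mathfrak{b}$ contained in $\mathcal{C}_{R/\mathfrak{b}}$ (resp. ${}'\mathcal{C}_{R/\mathfrak{b}}$, $\mathcal{C}'_{R/\mathfrak{b}}$). $\mathbb{L}^p_*(R)=\{S\in\mathbb{L}_*(R):\mathrm{ass}_R(S)=\mathfrak{a}(S)\}$ (perfect localizable sets), $*\in\{l,r,\emptyset\}$. $S$ is a left Ore set if $Sr\cap Rs\neq\emptyset$ for all $r\in R,s\in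 S$; right Ore symmetrically; Ore = left and right; $\mathrm{Ore}_l(R),\mathrm{Ore}_r(R),\mathrm{Ore}(R)$ are these sets. ${}'\mathbb{L}_l(R)$ is the set of multiplicative sets $S$ such that the image of $S$ in $R/{}'\mathfrak{a}(S)$ is a left Ore set of $R/{}'\mathfrak{a}(S)$; $\mathbb{L}'_r(R)$ is the set of multiplicative sets $S$ whose image in $R/\mathfrak{a}'(S)$ is a right Ore set; ${}'\mathbb{L}'_{l,r}(R)={}'\mathbb{L}_l(R)\cap\mathbb{L}'_r(R)$; $\mathbb{L}\mathrm{Ore}_*(R)=\mathbb{L}_*(R)\cap\mathrm{Ore}_*(R)$. *)

theory Defs
  imports Main
begin

text \<open>The ring R is the carrier UNIV of a type of class ring_1.
  The ring R<S^-1> = R<X_S>/I_S is presented by generators and relations: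
  terms of the free ring on R and generators x_a, modulo the least
  congruence containing the ring axioms, the relations of R, the relations
  s x_s = 1 = x_s s for s in S, and x_a = 0 for a not in S (so that only
  the generators x_s, s in S, survive).\<close>

datatype 'a rexp = Emb 'a | Xg 'a | Zr | On | Ad "'a rexp" "'a rexp"
  | Ng "'a rexp" | Ml "'a rexp" "'a rexp"

inductive loc_eq :: "'a::ring_1 set \<Rightarrow> 'a rexp \<Rightarrow> 'a rexp \<Rightarrow> bool" for S where
  refl: "loc_eq S t t"
| sym: "loc_eq S t u \<Longrightarrow> loc_eq S u t"
| trans: "loc_eq S t u \<Longrightarrow> loc_eq S u v \<Longrightarrow> loc_eq S t v"
| cong_add: "loc_eq S t t' \<Longrightarrow> loc_eq S u u' \<Longrightarrow> loc_eq S (Ad t u) (Ad t' u')"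
| cong_neg: "loc_eq S t t' \<Longrightarrow> loc_eq S (Ng t) (Ng t')"
| cong_mul: "loc_eq S t t' \<Longrightarrow> loc_eq S u u' \<Longrightarrow> loc_eq S (Ml t u) (Ml t' u')"
| add_assoc: "loc_eq S (Ad (Ad t u) v) (Ad t (Ad u v))"
| add_comm: "loc_eq S (Ad t u) (Ad u t)"
| add_zero: "loc_eq S (Ad Zr t) t"
| add_neg: "loc_eq S (Ad (Ng t) t) Zr"
| mul_assoc: "loc_eq S (Ml (Ml t u) v) (Ml t (Ml u v))"
| mul_one_l: "loc_eq S (Ml On t) t"
| mul_one_r: "loc_eq S (Ml t On) t"
| distr_l: "loc_eq S (Ml t (Ad u v)) (Ad (Ml t u) (Ml t v))"
| distr_r: "loc_eq S (Ml (Ad t u) v) (Ad (Ml t v) (Ml u v))"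
| emb_add: "loc_eq S (Emb (a + b)) (Ad (Emb a) (Emb b))"
| emb_mul: "loc_eq S (Emb (a * b)) (Ml (Emb a) (Emb b))"
| emb_one: "loc_eq S (Emb 1) On"
| inv_r: "s \<in> S \<Longrightarrow> loc_eq S (Ml (Emb s) (Xg s)) On"
| inv_l: "s \<in> S \<Longrightarrow> loc_eq S (Ml (Xg s) (Emb s)) On"
| kill: "a \<notin> S \<Longrightarrow> loc_eq S (Xg a) Zr"

definition mult_set :: "'a::ring_1 set \<Rightarrow> bool" where
  "mult_set S \<longleftrightarrow> 1 \<in> S \<and> (\<forall>a\<in>S. \<forall>b\<in>S. a * b \<in> S) \<and> 0 \<notin> S"

definition ass :: "'a::ring_1 set \<Rightarrow> 'a set" where
  "ass S = {r. loc_eq S (Emb r) Zr}"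

definition left_localizable :: "'a::ring_1 set \<Rightarrow> bool" where
  "left_localizable S \<longleftrightarrow> mult_set S \<and> \<not> loc_eq S On Zr \<and>
     (\<forall>t. \<exists>s\<in>S. \<exists>r. loc_eq S t (Ml (Xg s) (Emb r)))"

definition right_localizable :: "'a::ring_1 set \<Rightarrow> bool" where
  "right_localizable S \<longleftrightarrow> mult_set S \<and> \<not> loc_eq S On Zr \<and>
     (\<forall>t. \<exists>s\<in>S. \<exists>r. loc_eq S t (Ml (Emb r) (Xg s)))"

definition Ll :: "'a::ring_1 set set" where "Ll = {S. left_localizable S}"
definition Lr :: "'a::ring_1 set set" where "Lr = {S. right_localizable S}"
definition L :: "'a::ring_1 set set" where "L = Ll \<inter> Lr"

definition ideal :: "'a::ring_1 set \<Rightarrow> bool" where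
  "ideal I \<longleftrightarrow> 0 \<in> I \<and> (\<forall>x\<in>I. \<forall>y\<in>I. x + y \<in> I) \<and> (\<forall>x\<in>I. - x \<in> I)
     \<and> (\<forall>x\<in>I. \<forall>r. r * x \<in> I \<and> x * r \<in> I)"

text \<open>image of s in R/b lies in 'C_{R/b} (left regular: xs = 0 implies x = 0),
  resp. C'_{R/b} (right regular: sx = 0 implies x = 0)\<close>
definition lreg_mod :: "'a::ring_1 set \<Rightarrow> 'a \<Rightarrow> bool" where
  "lreg_mod b s \<longleftrightarrow> (\<forall>x. x * s \<in> b \<longrightarrow> x \<in> b)"
definition rreg_mod :: "'a::ring_1 set \<Rightarrow> 'a \<Rightarrow> bool" where
  "rreg_mod b s \<longleftrightarrow> (\<forall>x. s * x \<in> b \<longrightarrow> x \<in> b)"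

definition a_ideal :: "'a::ring_1 set \<Rightarrow> 'a set" where
  "a_ideal S = \<Inter>{b. ideal b \<and> (\<forall>s\<in>S. lreg_mod b s \<and> rreg_mod b s)}"
definition la_ideal :: "'a::ring_1 set \<Rightarrow> 'a set" where
  "la_ideal S = \<Inter>{b. ideal b \<and> (\<forall>s\<in>S. lreg_mod b s)}"
definition ra_ideal :: "'a::ring_1 set \<Rightarrow> 'a set" where
  "ra_ideal S = \<Inter>{b. ideal b \<and> (\<forall>s\<in>S. rreg_mod b s)}"

definition Lpl :: "'a::ring_1 set set" where "Lpl = {S\<in>Ll. ass S = a_ideal S}"
definition Lpr :: "'a::ring_1 set set" where "Lpr = {S\<in>Lr. ass S = a_ideal S}"
definition Lp :: "'a::ring_1 set set" where "Lp = {S\<in>L. ass S = a_ideal S}"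

text \<open>Ore sets modulo an ideal b (b = {0} gives Ore sets of R); the image of S
  in R/b must be a multiplicative set, i.e. S is disjoint from b.\<close>
definition left_ore_mod :: "'a::ring_1 set \<Rightarrow> 'a set \<Rightarrow> bool" where
  "left_ore_mod b S \<longleftrightarrow> (\<forall>s\<in>S. s \<notin> b) \<and>
     (\<forall>r. \<forall>s\<in>S. \<exists>s'\<in>S. \<exists>r'. s' * r - r' * s \<in> b)"
definition right_ore_mod :: "'a::ring_1 set \<Rightarrow> 'a set \<Rightarrow> bool" where
  "right_ore_mod b S \<longleftrightarrow> (\<forall>s\<in>S. s \<notin> b) \<and>
     (\<forall>r. \<forall>s\<in>S. \<exists>s'\<in>S. \<exists>r'. r * s' - s * r' \<in> b)"

definition Ore_l :: "'a::ring_1 set set" where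
  "Ore_l = {S. mult_set S \<and> (\<forall>r. \<forall>s\<in>S. \<exists>s'\<in>S. \<exists>r'. s' * r = r' * s)}"
definition Ore_r :: "'a::ring_1 set set" where
  "Ore_r = {S. mult_set S \<and> (\<forall>r. \<forall>s\<in>S. \<exists>s'\<in>S. \<exists>r'. r * s' = s * r')}"
definition Ore :: "'a::ring_1 set set" where "Ore = Ore_l \<inter> Ore_r"

definition lL_l :: "'a::ring_1 set set" where
  "lL_l = {S. mult_set S \<and> left_ore_mod (la_ideal S) S}"
definition rL_r :: "'a::ring_1 set set" where
  "rL_r = {S. mult_set S \<and> right_ore_mod (ra_ideal S) S}"
definition lrL_lr :: "'a::ring_1 set set" where "lrL_lr = lL_l \<inter> rL_r"

definition LOre_l :: "'a::ring_1 set set" where "LOre_l = Ll \<inter> Ore_l"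
definition LOre_r :: "'a::ring_1 set set" where "LOre_r = Lr \<inter> Ore_r"

end

theory Submission
  imports Defs
begin


lemma le_trans[trans]: "loc_eq S a b \<Longrightarrow> loc_eq S b c \<Longrightarrow> loc_eq S a c"
  by (rule loc_eq.trans)

lemmas le_intros = loc_eq.intros

lemma le_cancel:
  assumes "loc_eq S (Ad a x) (Ad a y)" shows "loc_eq S x y"
proof -
  have "loc_eq S x (Ad Zr x)" by (rule loc_eq.sym, rule loc_eq.add_zero)
  also have "loc_eq S \<dots> (Ad (Ad (Ng a) a) x)" by (intro loc_eq.cong_add loc_eq.refl loc_eq.sym[OF loc_eq.add_neg])
  also have "loc_eq S \<dots> (Ad (Ng a) (Ad a x))" by (rule loc_eq.add_assoc)
  also have "loc_eq S \<dots> (Ad (Ng a) (Ad a y))" by (intro loc_eq.cong_add loc_eq.refl assms)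
  also have "loc_eq S \<dots> (Ad (Ad (Ng a) a) y)" by (rule loc_eq.sym, rule loc_eq.add_assoc)
  also have "loc_eq S \<dots> (Ad Zr y)" by (intro loc_eq.cong_add loc_eq.refl loc_eq.add_neg)
  also have "loc_eq S \<dots> y" by (rule loc_eq.add_zero)
  finally show ?thesis .
qed

lemma le_add_zero_r: "loc_eq S (Ad t Zr) t"
  by (rule le_trans[OF loc_eq.add_comm loc_eq.add_zero])

lemma le_zero_self: assumes "loc_eq S z (Ad z z)" shows "loc_eq S Zr z"
proof -
  have "loc_eq S (Ad z Zr) (Ad z z)" by (rule le_trans[OF le_add_zero_r assms])
  then show ?thesis by (rule le_cancel)
qed

lemma le_mul_zero_r: "loc_eq S Zr (Ml t Zr)"
proof (rule le_zero_self)
  have "loc_eq S (Ml t Zr) (Ml t (Ad Zr Zr))" by (intro loc_eq.cong_mul loc_eq.refl loc_eq.sym[OF loc_eq.add_zero])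
  also have "loc_eq S \<dots> (Ad (Ml t Zr) (Ml t Zr))" by (rule loc_eq.distr_l)
  finally show "loc_eq S (Ml t Zr) (Ad (Ml t Zr) (Ml t Zr))" .
qed

lemma le_mul_zero_l: "loc_eq S Zr (Ml Zr t)"
proof (rule le_zero_self)
  have "loc_eq S (Ml Zr t) (Ml (Ad Zr Zr) t)" by (intro loc_eq.cong_mul loc_eq.refl loc_eq.sym[OF loc_eq.add_zero])
  also have "loc_eq S \<dots> (Ad (Ml Zr t) (Ml Zr t))" by (rule loc_eq.distr_r)
  finally show "loc_eq S (Ml Zr t) (Ad (Ml Zr t) (Ml Zr t))" .
qed

lemma le_neg_unique: assumes "loc_eq S (Ad a x) Zr" "loc_eq S (Ad a y) Zr" shows "loc_eq S x y"
  by (rule le_cancel[of S a]) (rule le_trans[OF assms(1) loc_eq.sym[OF assms(2)]])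

lemma le_add_neg_r: "loc_eq S (Ad t (Ng t)) Zr"
  by (rule le_trans[OF loc_eq.add_comm loc_eq.add_neg])

lemma le_emb0: "loc_eq S (Emb 0) Zr"
proof -
  have "loc_eq S Zr (Emb 0)"
    by (rule le_zero_self) (metis loc_eq.emb_add add_0)
  then show ?thesis by (rule loc_eq.sym)
qed

lemma le_emb_neg: "loc_eq S (Emb (- a)) (Ng (Emb a))"
proof (rule le_neg_unique[of S "Emb a"])
  have "loc_eq S (Ad (Emb a) (Emb (- a))) (Emb (a + - a))" by (rule loc_eq.sym, rule loc_eq.emb_add)
  also have "loc_eq S \<dots> Zr" using le_emb0 by simp
  finally show "loc_eq S (Ad (Emb a) (Emb (- a))) Zr" .
  show "loc_eq S (Ad (Emb a) (Ng (Emb a))) Zr" by (rule le_add_neg_r)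
qed

lemma le_mul_neg_r: "loc_eq S (Ml t (Ng u)) (Ng (Ml t u))"
proof (rule le_neg_unique[of S "Ml t u"])
  have "loc_eq S (Ad (Ml t u) (Ml t (Ng u))) (Ml t (Ad u (Ng u)))" by (rule loc_eq.sym, rule loc_eq.distr_l)
  also have "loc_eq S \<dots> (Ml t Zr)" by (intro loc_eq.cong_mul loc_eq.refl le_add_neg_r)
  also have "loc_eq S \<dots> Zr" by (rule loc_eq.sym, rule le_mul_zero_r)
  finally show "loc_eq S (Ad (Ml t u) (Ml t (Ng u))) Zr" .
  show "loc_eq S (Ad (Ml t u) (Ng (Ml t u))) Zr" by (rule le_add_neg_r)
qed

lemma le_ng_zero: "loc_eq S (Ng Zr) Zr"
  by (rule le_trans[OF loc_eq.sym[OF le_add_zero_r] loc_eq.add_neg])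

lemma le_emb_diff: assumes "loc_eq S (Emb (a - b)) Zr" shows "loc_eq S (Emb a) (Emb b)"
proof -
  have "loc_eq S (Emb a) (Emb ((a - b) + b))" by simp (rule loc_eq.refl)
  also have "loc_eq S \<dots> (Ad (Emb (a - b)) (Emb b))" by (rule loc_eq.emb_add)
  also have "loc_eq S \<dots> (Ad Zr (Emb b))" by (intro loc_eq.cong_add loc_eq.refl assms)
  also have "loc_eq S \<dots> (Emb b)" by (rule loc_eq.add_zero)
  finally show ?thesis .
qed

lemma ideal_ass: "ideal (ass S)"
  unfolding ideal_def ass_def
proof (intro conjI ballI allI; simp)
  show "loc_eq S (Emb 0) Zr" by (rule le_emb0)
  fix x y assume x: "loc_eq S (Emb x) Zr" and y: "loc_eq S (Emb y) Zr"
  have "loc_eq S (Emb (x + y)) (Ad (Emb x) (Emb y))" by (rule loc_eq.emb_add)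
  also have "loc_eq S \<dots> (Ad Zr Zr)" by (intro loc_eq.cong_add x y)
  also have "loc_eq S \<dots> Zr" by (rule loc_eq.add_zero)
  finally show "loc_eq S (Emb (x + y)) Zr" .
next
  fix x assume x: "loc_eq S (Emb x) Zr"
  have "loc_eq S (Emb (- x)) (Ng (Emb x))" by (rule le_emb_neg)
  also have "loc_eq S \<dots> (Ng Zr)" by (intro loc_eq.cong_neg x)
  also have "loc_eq S \<dots> Zr" by (rule le_ng_zero)
  finally show "loc_eq S (Emb (- x)) Zr" .
  fix r
  have "loc_eq S (Emb (r * x)) (Ml (Emb r) (Emb x))" by (rule loc_eq.emb_mul)
  also have "loc_eq S \<dots> (Ml (Emb r) Zr)" by (intro loc_eq.cong_mul loc_eq.refl x)
  also have "loc_eq S \<dots> Zr" by (rule loc_eq.sym, rule le_mul_zero_r)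
  finally show "loc_eq S (Emb (r * x)) Zr" .
  have "loc_eq S (Emb (x * r)) (Ml (Emb x) (Emb r))" by (rule loc_eq.emb_mul)
  also have "loc_eq S \<dots> (Ml Zr (Emb r))" by (intro loc_eq.cong_mul loc_eq.refl x)
  also have "loc_eq S \<dots> Zr" by (rule loc_eq.sym, rule le_mul_zero_l)
  finally show "loc_eq S (Emb (x * r)) Zr" .
qed



lemma ideal_Inter: "(\<And>b. b \<in> F \<Longrightarrow> ideal b) \<Longrightarrow> ideal (\<Inter>F)"
  unfolding ideal_def by blast

lemma la_ideal_ideal: "ideal (la_ideal S)"
  unfolding la_ideal_def by (rule ideal_Inter) blast
lemma ra_ideal_ideal: "ideal (ra_ideal S)"
  unfolding ra_ideal_def by (rule ideal_Inter) blast
lemma a_ideal_ideal: "ideal (a_ideal S)"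
  unfolding a_ideal_def by (rule ideal_Inter) blast

lemma la_ideal_lreg: "s \<in> S \<Longrightarrow> lreg_mod (la_ideal S) s"
  unfolding la_ideal_def lreg_mod_def by blast
lemma ra_ideal_rreg: "s \<in> S \<Longrightarrow> rreg_mod (ra_ideal S) s"
  unfolding ra_ideal_def rreg_mod_def by blast
lemma a_ideal_lreg: "s \<in> S \<Longrightarrow> lreg_mod (a_ideal S) s"
  unfolding a_ideal_def lreg_mod_def by blast
lemma a_ideal_rreg: "s \<in> S \<Longrightarrow> rreg_mod (a_ideal S) s"
  unfolding a_ideal_def rreg_mod_def by blast

lemma a_ideal_least: "ideal b \<Longrightarrow> (\<And>s. s \<in> S \<Longrightarrow> lreg_mod b s \<and> rreg_mod b s) \<Longrightarrow> a_ideal S \<subseteq> b"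
  unfolding a_ideal_def by blast
lemma la_ideal_least: "ideal b \<Longrightarrow> (\<And>s. s \<in> S \<Longrightarrow> lreg_mod b s) \<Longrightarrow> la_ideal S \<subseteq> b"
  unfolding la_ideal_def by blast
lemma ra_ideal_least: "ideal b \<Longrightarrow> (\<And>s. s \<in> S \<Longrightarrow> rreg_mod b s) \<Longrightarrow> ra_ideal S \<subseteq> b"
  unfolding ra_ideal_def by blast

lemma la_sub_a: "la_ideal S \<subseteq> a_ideal S"
  by (rule la_ideal_least[OF a_ideal_ideal a_ideal_lreg])
lemma ra_sub_a: "ra_ideal S \<subseteq> a_ideal S"
  by (rule ra_ideal_least[OF a_ideal_ideal a_ideal_rreg])

lemma le_X1: assumes "s \<in> S" shows "loc_eq S (Ml (Ml t (Emb s)) (Xg s)) t"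
proof -
  have "loc_eq S (Ml (Ml t (Emb s)) (Xg s)) (Ml t (Ml (Emb s) (Xg s)))" by (rule loc_eq.mul_assoc)
  also have "loc_eq S \<dots> (Ml t On)" by (intro loc_eq.cong_mul loc_eq.refl loc_eq.inv_r assms)
  also have "loc_eq S \<dots> t" by (rule loc_eq.mul_one_r)
  finally show ?thesis .
qed

lemma le_X2: assumes "s \<in> S" shows "loc_eq S (Ml (Ml t (Xg s)) (Emb s)) t"
proof -
  have "loc_eq S (Ml (Ml t (Xg s)) (Emb s)) (Ml t (Ml (Xg s) (Emb s)))" by (rule loc_eq.mul_assoc)
  also have "loc_eq S \<dots> (Ml t On)" by (intro loc_eq.cong_mul loc_eq.refl loc_eq.inv_l assms)
  also have "loc_eq S \<dots> t" by (rule loc_eq.mul_one_r)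
  finally show ?thesis .
qed

lemma le_X3: assumes "s \<in> S" shows "loc_eq S (Ml (Xg s) (Ml (Emb s) t)) t"
proof -
  have "loc_eq S (Ml (Xg s) (Ml (Emb s) t)) (Ml (Ml (Xg s) (Emb s)) t)" by (rule loc_eq.sym, rule loc_eq.mul_assoc)
  also have "loc_eq S \<dots> (Ml On t)" by (intro loc_eq.cong_mul loc_eq.refl loc_eq.inv_l assms)
  also have "loc_eq S \<dots> t" by (rule loc_eq.mul_one_l)
  finally show ?thesis .
qed

lemma le_X4: assumes "s \<in> S" shows "loc_eq S (Ml (Emb s) (Ml (Xg s) t)) t"
proof -
  have "loc_eq S (Ml (Emb s) (Ml (Xg s) t)) (Ml (Ml (Emb s) (Xg s)) t)" by (rule loc_eq.sym, rule loc_eq.mul_assoc)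
  also have "loc_eq S \<dots> (Ml On t)" by (intro loc_eq.cong_mul loc_eq.refl loc_eq.inv_r assms)
  also have "loc_eq S \<dots> t" by (rule loc_eq.mul_one_l)
  finally show ?thesis .
qed

lemma ass_lreg: assumes "s \<in> S" shows "lreg_mod (ass S) s"
  unfolding lreg_mod_def ass_def
proof (intro allI impI, simp)
  fix x assume h: "loc_eq S (Emb (x * s)) Zr"
  have "loc_eq S (Emb x) (Ml (Ml (Emb x) (Emb s)) (Xg s))" by (rule loc_eq.sym, rule le_X1[OF assms])
  also have "loc_eq S \<dots> (Ml (Emb (x * s)) (Xg s))" by (intro loc_eq.cong_mul loc_eq.refl loc_eq.sym[OF loc_eq.emb_mul])
  also have "loc_eq S \<dots> (Ml Zr (Xg s))" by (intro loc_eq.cong_mul loc_eq.refl h)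
  also have "loc_eq S \<dots> Zr" by (rule loc_eq.sym, rule le_mul_zero_l)
  finally show "loc_eq S (Emb x) Zr" .
qed

lemma ass_rreg: assumes "s \<in> S" shows "rreg_mod (ass S) s"
  unfolding rreg_mod_def ass_def
proof (intro allI impI, simp)
  fix x assume h: "loc_eq S (Emb (s * x)) Zr"
  have "loc_eq S (Emb x) (Ml (Xg s) (Ml (Emb s) (Emb x)))" by (rule loc_eq.sym, rule le_X3[OF assms])
  also have "loc_eq S \<dots> (Ml (Xg s) (Emb (s * x)))" by (intro loc_eq.cong_mul loc_eq.refl loc_eq.sym[OF loc_eq.emb_mul])
  also have "loc_eq S \<dots> (Ml (Xg s) Zr)" by (intro loc_eq.cong_mul loc_eq.refl h)
  also have "loc_eq S \<dots> Zr" by (rule loc_eq.sym, rule le_mul_zero_r)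
  finally show "loc_eq S (Emb x) Zr" .
qed

lemma a_sub_ass: "a_ideal S \<subseteq> ass S"
  by (rule a_ideal_least[OF ideal_ass]) (simp add: ass_lreg ass_rreg)

lemma ass_disj: assumes "\<not> loc_eq S On Zr" "s \<in> S" shows "s \<notin> ass S"
proof
  assume "s \<in> ass S"
  hence h: "loc_eq S (Emb s) Zr" by (simp add: ass_def)
  have "loc_eq S On (Ml (Xg s) (Emb s))" by (rule loc_eq.sym, rule loc_eq.inv_l[OF assms(2)])
  also have "loc_eq S \<dots> (Ml (Xg s) Zr)" by (intro loc_eq.cong_mul loc_eq.refl h)
  also have "loc_eq S \<dots> Zr" by (rule loc_eq.sym, rule le_mul_zero_r)
  finally show False using assms(1) by blast
qed



lemma cm_l: "loc_eq S a a' \<Longrightarrow> loc_eq S (Ml a b) (Ml a' b)" by (intro loc_eq.cong_mul loc_eq.refl)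
lemma cm_r: "loc_eq S b b' \<Longrightarrow> loc_eq S (Ml a b) (Ml a b')" by (intro loc_eq.cong_mul loc_eq.refl)
lemma ca_l: "loc_eq S a a' \<Longrightarrow> loc_eq S (Ad a b) (Ad a' b)" by (intro loc_eq.cong_add loc_eq.refl)
lemma ca_r: "loc_eq S b b' \<Longrightarrow> loc_eq S (Ad a b) (Ad a b')" by (intro loc_eq.cong_add loc_eq.refl)
lemma asl: "loc_eq S (Ml a (Ml b c)) (Ml (Ml a b) c)" by (rule loc_eq.sym, rule loc_eq.mul_assoc)
lemma asr: "loc_eq S (Ml (Ml a b) c) (Ml a (Ml b c))" by (rule loc_eq.mul_assoc)
lemma em: "loc_eq S (Ml (Emb a) (Emb b)) (Emb (a * b))" by (rule loc_eq.sym, rule loc_eq.emb_mul)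
lemma les: "loc_eq S a b \<Longrightarrow> loc_eq S b a" by (rule loc_eq.sym)

lemma le_G:
  assumes s: "s \<in> S" and T: "T \<in> S" and h: "loc_eq S (Emb (a * s)) (Emb T)"
  shows "loc_eq S (Xg s) (Ml (Xg T) (Emb a))"
proof -
  have "loc_eq S (Ml (Xg T) (Emb a)) (Ml (Ml (Ml (Xg T) (Emb a)) (Emb s)) (Xg s))" by (rule les, rule le_X1[OF s])
  also have "loc_eq S \<dots> (Ml (Ml (Xg T) (Ml (Emb a) (Emb s))) (Xg s))" by (rule cm_l, rule asr)
  also have "loc_eq S \<dots> (Ml (Ml (Xg T) (Emb (a * s))) (Xg s))" by (rule cm_l, rule cm_r, rule em)
  also have "loc_eq S \<dots> (Ml (Ml (Xg T) (Emb T)) (Xg s))" by (rule cm_l, rule cm_r, rule h)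
  also have "loc_eq S \<dots> (Ml On (Xg s))" by (rule cm_l, rule loc_eq.inv_l[OF T])
  also have "loc_eq S \<dots> (Xg s)" by (rule loc_eq.mul_one_l)
  finally show ?thesis by (rule les)
qed

lemma le_H:
  assumes "loc_eq S (Xg s) (Ml X (Emb a))"
  shows "loc_eq S (Ml (Xg s) (Emb r)) (Ml X (Emb (a * r)))"
proof -
  have "loc_eq S (Ml (Xg s) (Emb r)) (Ml (Ml X (Emb a)) (Emb r))" by (rule cm_l, rule assms)
  also have "loc_eq S \<dots> (Ml X (Ml (Emb a) (Emb r)))" by (rule asr)
  also have "loc_eq S \<dots> (Ml X (Emb (a * r)))" by (rule cm_r, rule em)
  finally show ?thesis .
qed

lemma le_XX:
  assumes s: "s \<in> S" and t: "t \<in> S" and ts: "t * s \<in> S"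
  shows "loc_eq S (Ml (Xg s) (Xg t)) (Xg (t * s))"
proof -
  let ?P = "Ml (Xg s) (Xg t)"
  have "loc_eq S ?P (Ml (Ml ?P (Emb (t * s))) (Xg (t * s)))" by (rule les, rule le_X1[OF ts])
  also have "loc_eq S \<dots> (Ml (Ml ?P (Ml (Emb t) (Emb s))) (Xg (t * s)))" by (rule cm_l, rule cm_r, rule loc_eq.emb_mul)
  also have "loc_eq S \<dots> (Ml (Ml (Ml ?P (Emb t)) (Emb s)) (Xg (t * s)))" by (rule cm_l, rule asl)
  also have "loc_eq S \<dots> (Ml (Ml (Xg s) (Emb s)) (Xg (t * s)))" by (rule cm_l, rule cm_l, rule le_X2[OF t])
  also have "loc_eq S \<dots> (Ml On (Xg (t * s)))" by (rule cm_l, rule loc_eq.inv_l[OF s])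
  also have "loc_eq S \<dots> (Xg (t * s))" by (rule loc_eq.mul_one_l)
  finally show ?thesis .
qed

lemma le_swap:
  assumes t: "t \<in> S" and s: "s \<in> S" and h: "loc_eq S (Emb (t * r)) (Emb (r' * s))"
  shows "loc_eq S (Ml (Emb r) (Xg s)) (Ml (Xg t) (Emb r'))"
proof -
  have "loc_eq S (Ml (Emb r) (Xg s)) (Ml (Xg t) (Ml (Emb t) (Ml (Emb r) (Xg s))))" by (rule les, rule le_X3[OF t])
  also have "loc_eq S \<dots> (Ml (Xg t) (Ml (Ml (Emb t) (Emb r)) (Xg s)))" by (rule cm_r, rule asl)
  also have "loc_eq S \<dots> (Ml (Xg t) (Ml (Emb (t * r)) (Xg s)))" by (rule cm_r, rule cm_l, rule em)
  also have "loc_eq S \<dots> (Ml (Xg t) (Ml (Emb (r' * s)) (Xg s)))" by (rule cm_r, rule cm_l, rule h)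
  also have "loc_eq S \<dots> (Ml (Xg t) (Ml (Ml (Emb r') (Emb s)) (Xg s)))" by (rule cm_r, rule cm_l, rule loc_eq.emb_mul)
  also have "loc_eq S \<dots> (Ml (Xg t) (Emb r'))" by (rule cm_r, rule le_X1[OF s])
  finally show ?thesis .
qed

lemma left_repr:
  assumes ms: "mult_set S"
    and ore: "\<And>r s. s \<in> S \<Longrightarrow> \<exists>s'\<in>S. \<exists>r'. loc_eq S (Emb (s' * r)) (Emb (r' * s))"
  shows "\<exists>s\<in>S. \<exists>r. loc_eq S t (Ml (Xg s) (Emb r))"
proof (induction t)
  have one: "1 \<in> S" and mul: "\<And>a b. a \<in> S \<Longrightarrow> b \<in> S \<Longrightarrow> a * b \<in> S" using ms by (auto simp: mult_set_def)
  {
  case (Emb r)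
  have "loc_eq S (Emb r) (Ml On (Emb r))" by (rule les, rule loc_eq.mul_one_l)
  also have "loc_eq S \<dots> (Ml (Ml (Xg 1) (Emb 1)) (Emb r))" by (rule cm_l, rule les, rule loc_eq.inv_l[OF one])
  also have "loc_eq S \<dots> (Ml (Xg 1) (Ml (Emb 1) (Emb r)))" by (rule asr)
  also have "loc_eq S \<dots> (Ml (Xg 1) (Emb (1 * r)))" by (rule cm_r, rule em)
  finally show ?case using one by auto
  next
  case Zr
  have "loc_eq S Zr (Ml (Xg 1) Zr)" by (rule le_mul_zero_r)
  also have "loc_eq S \<dots> (Ml (Xg 1) (Emb 0))" by (rule cm_r, rule les, rule le_emb0)
  finally show ?case using one by auto
  next
  case On
  have "loc_eq S On (Ml (Xg 1) (Emb 1))" by (rule les, rule loc_eq.inv_l[OF one])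
  then show ?case using one by auto
  next
  case (Xg a)
  show ?case
  proof (cases "a \<in> S")
    case True
    have "loc_eq S (Xg a) (Ml (Xg a) On)" by (rule les, rule loc_eq.mul_one_r)
    also have "loc_eq S \<dots> (Ml (Xg a) (Emb 1))" by (rule cm_r, rule les, rule loc_eq.emb_one)
    finally show ?thesis using True by auto
  next
    case False
    have "loc_eq S (Xg a) Zr" by (rule loc_eq.kill[OF False])
    also have "loc_eq S Zr (Ml (Xg 1) Zr)" by (rule le_mul_zero_r)
    also have "loc_eq S \<dots> (Ml (Xg 1) (Emb 0))" by (rule cm_r, rule les, rule le_emb0)
    finally show ?thesis using one by auto
  qed
  next
  case (Ng t)
  then obtain s r where s: "s \<in> S" and h: "loc_eq S t (Ml (Xg s) (Emb r))" by blast
  have "loc_eq S (Ng t) (Ng (Ml (Xg s) (Emb r)))" by (rule loc_eq.cong_neg[OF h])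
  also have "loc_eq S \<dots> (Ml (Xg s) (Ng (Emb r)))" by (rule les, rule le_mul_neg_r)
  also have "loc_eq S \<dots> (Ml (Xg s) (Emb (- r)))" by (rule cm_r, rule les, rule le_emb_neg)
  finally show ?case using s by auto
  next
  case (Ad t u)
  then obtain s r s' r' where s: "s \<in> S" and h: "loc_eq S t (Ml (Xg s) (Emb r))"
    and s': "s' \<in> S" and h': "loc_eq S u (Ml (Xg s') (Emb r'))" by blast
  obtain t0 u0 where t0: "t0 \<in> S" and o: "loc_eq S (Emb (t0 * s)) (Emb (u0 * s'))" using ore[OF s'] by blast
  have T: "t0 * s \<in> S" using mul t0 s by blast
  have g1: "loc_eq S (Xg s) (Ml (Xg (t0 * s)) (Emb t0))" by (rule le_G[OF s T], rule loc_eq.refl)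
  have g2: "loc_eq S (Xg s') (Ml (Xg (t0 * s)) (Emb u0))" by (rule le_G[OF s' T], rule les, rule o)
  have "loc_eq S (Ad t u) (Ad (Ml (Xg s) (Emb r)) (Ml (Xg s') (Emb r')))" by (rule loc_eq.cong_add[OF h h'])
  also have "loc_eq S \<dots> (Ad (Ml (Xg (t0 * s)) (Emb (t0 * r))) (Ml (Xg (t0 * s)) (Emb (u0 * r'))))"
    by (rule loc_eq.cong_add; rule le_H; rule g1 g2)
  also have "loc_eq S \<dots> (Ml (Xg (t0 * s)) (Ad (Emb (t0 * r)) (Emb (u0 * r'))))" by (rule les, rule loc_eq.distr_l)
  also have "loc_eq S \<dots> (Ml (Xg (t0 * s)) (Emb (t0 * r + u0 * r')))" by (rule cm_r, rule les, rule loc_eq.emb_add)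
  finally show ?case using T by auto
  next
  case (Ml t u)
  then obtain s r s' r' where s: "s \<in> S" and h: "loc_eq S t (Ml (Xg s) (Emb r))"
    and s': "s' \<in> S" and h': "loc_eq S u (Ml (Xg s') (Emb r'))" by blast
  obtain t0 r2 where t0: "t0 \<in> S" and o: "loc_eq S (Emb (t0 * r)) (Emb (r2 * s'))" using ore[OF s'] by blast
  have T: "t0 * s \<in> S" using mul t0 s by blast
  have "loc_eq S (Ml t u) (Ml (Ml (Xg s) (Emb r)) (Ml (Xg s') (Emb r')))" by (rule loc_eq.cong_mul[OF h h'])
  also have "loc_eq S \<dots> (Ml (Xg s) (Ml (Emb r) (Ml (Xg s') (Emb r'))))" by (rule asr)
  also have "loc_eq S \<dots> (Ml (Xg s) (Ml (Ml (Emb r) (Xg s')) (Emb r')))" by (rule cm_r, rule asl)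
  also have "loc_eq S \<dots> (Ml (Xg s) (Ml (Ml (Xg t0) (Emb r2)) (Emb r')))" by (rule cm_r, rule cm_l, rule le_swap[OF t0 s' o])
  also have "loc_eq S \<dots> (Ml (Xg s) (Ml (Xg t0) (Emb (r2 * r'))))" by (rule cm_r, rule le_trans[OF asr cm_r[OF em]])
  also have "loc_eq S \<dots> (Ml (Ml (Xg s) (Xg t0)) (Emb (r2 * r')))" by (rule asl)
  also have "loc_eq S \<dots> (Ml (Xg (t0 * s)) (Emb (r2 * r')))" by (rule cm_l, rule le_XX[OF s t0 T])
  finally show ?case using T by auto
  }
qed



locale omod =
  fixes S :: "'a::ring_1 set" and c :: "'a set"
  assumes idl: "ideal c" and ms: "mult_set S" and disj: "\<And>s. s \<in> S \<Longrightarrow> s \<notin> c"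
    and lreg: "\<And>s. s \<in> S \<Longrightarrow> lreg_mod c s" and rreg: "\<And>s. s \<in> S \<Longrightarrow> rreg_mod c s"
    and ore: "\<And>r s. s \<in> S \<Longrightarrow> \<exists>s'\<in>S. \<exists>r'. s' * r - r' * s \<in> c"
begin

lemma one_S: "1 \<in> S" using ms by (simp add: mult_set_def)
lemma mul_S: "a \<in> S \<Longrightarrow> b \<in> S \<Longrightarrow> a * b \<in> S" using ms by (simp add: mult_set_def)

lemma I_add: "x \<in> c \<Longrightarrow> y \<in> c \<Longrightarrow> x + y \<in> c" using idl by (simp add: ideal_def)
lemma I_neg: "x \<in> c \<Longrightarrow> - x \<in> c" using idl by (simp add: ideal_def)
lemma I_lm: "x \<in> c \<Longrightarrow> r * x \<in> c" using idl by (simp add: ideal_def)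
lemma I_rm: "x \<in> c \<Longrightarrow> x * r \<in> c" using idl by (simp add: ideal_def)
lemma I_0: "0 \<in> c" using idl by (simp add: ideal_def)

definition cg :: "'a \<Rightarrow> 'a \<Rightarrow> bool" where "cg x y \<longleftrightarrow> x - y \<in> c"

lemma cg_refl: "cg x x" by (simp add: cg_def I_0)
lemma cg_eq: "x = y \<Longrightarrow> cg x y" by (simp add: cg_refl)
lemma cg_sym: "cg x y \<Longrightarrow> cg y x"
  unfolding cg_def using I_neg by fastforce
lemma cg_trans[trans]: "cg x y \<Longrightarrow> cg y z \<Longrightarrow> cg x z"
  unfolding cg_def using I_add by fastforce
lemma cg_add: "cg a b \<Longrightarrow> cg a' b' \<Longrightarrow> cg (a + a') (b + b')"
  unfolding cg_def using I_add by (fastforce simp: algebra_simps)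
lemma cg_neg: "cg a b \<Longrightarrow> cg (- a) (- b)"
  unfolding cg_def using I_neg by (fastforce simp: algebra_simps)
lemma cg_lm: "cg a b \<Longrightarrow> cg (z * a) (z * b)"
  unfolding cg_def using I_lm by (fastforce simp: algebra_simps)
lemma cg_rm: "cg a b \<Longrightarrow> cg (a * z) (b * z)"
  unfolding cg_def using I_rm by (fastforce simp: algebra_simps)
lemma cg_cancel: "s \<in> S \<Longrightarrow> cg (x * s) (y * s) \<Longrightarrow> cg x y"
  unfolding cg_def using lreg by (simp add: lreg_mod_def algebra_simps)
lemma cg_zero_l: "s \<in> S \<Longrightarrow> cg (s * x) 0 \<Longrightarrow> x \<in> c"
  unfolding cg_def using rreg by (simp add: rreg_mod_def)

lemma ore': "s \<in> S \<Longrightarrow> \<exists>s'\<in>S. \<exists>r'. cg (s' * r) (r' * s)"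
  using ore unfolding cg_def by blast

definition orw :: "'a \<Rightarrow> 'a \<Rightarrow> 'a \<times> 'a" where
  "orw r s = (SOME p. fst p \<in> S \<and> cg (fst p * r) (snd p * s))"

lemma orw: assumes "s \<in> S" shows "fst (orw r s) \<in> S" "cg (fst (orw r s) * r) (snd (orw r s) * s)"
proof -
  have "\<exists>p. fst p \<in> S \<and> cg (fst p * r) (snd p * s)" using ore'[OF assms, of r] by auto
  from someI_ex[OF this] show "fst (orw r s) \<in> S" "cg (fst (orw r s) * r) (snd (orw r s) * s)"
    unfolding orw_def by auto
qed

definition fe :: "'a \<times> 'a \<Rightarrow> 'a \<times> 'a \<Rightarrow> bool" where
  "fe p q \<longleftrightarrow> (\<exists>a a' t. t \<in> S \<and> cg (a * fst p) t \<and> cg (a' * fst q) t \<and> cg (a * snd p) (a' * snd q))"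

definition valid :: "'a \<times> 'a \<Rightarrow> bool" where "valid p \<longleftrightarrow> fst p \<in> S"

definition addf :: "'a \<times> 'a \<Rightarrow> 'a \<times> 'a \<Rightarrow> 'a \<times> 'a" where
  "addf p q = (fst (orw (fst p) (fst q)) * fst p,
     fst (orw (fst p) (fst q)) * snd p + snd (orw (fst p) (fst q)) * snd q)"
definition act :: "'a \<Rightarrow> 'a \<times> 'a \<Rightarrow> 'a \<times> 'a" where
  "act r p = (fst (orw r (fst p)), snd (orw r (fst p)) * snd p)"
definition dvs :: "'a \<Rightarrow> 'a \<times> 'a \<Rightarrow> 'a \<times> 'a" where
  "dvs s0 p = (fst p * s0, snd p)"
definition negf :: "'a \<times> 'a \<Rightarrow> 'a \<times> 'a" where
  "negf p = (fst p, - snd p)"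
definition zf :: "'a \<times> 'a" where "zf = (1, 0)"

lemma fe_I: "t \<in> S \<Longrightarrow> cg (a * s) t \<Longrightarrow> cg (a' * s') t \<Longrightarrow> cg (a * x) (a' * x') \<Longrightarrow> fe (s, x) (s', x')"
  unfolding fe_def by auto

lemma fe_E: assumes "fe (s, x) (s', x')"
  obtains a a' t where "t \<in> S" "cg (a * s) t" "cg (a' * s') t" "cg (a * x) (a' * x')"
  using assms unfolding fe_def by auto

lemma fe_refl: "s \<in> S \<Longrightarrow> fe (s, x) (s, x)"
  by (rule fe_I[of s 1 s 1]) (auto intro: cg_refl)

lemma fe_refl': "valid p \<Longrightarrow> fe p p"
  using fe_refl unfolding valid_def by (cases p) auto

lemma fe_sym: "fe p q \<Longrightarrow> fe q p"
  unfolding fe_def using cg_sym by blast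

lemma fe_trans:
  assumes pq: "fe p q" and qr: "fe q r" and vq: "valid q"
  shows "fe p r"
proof -
  obtain s x s' x' s'' x'' where P: "p = (s, x)" "q = (s', x')" "r = (s'', x'')" by (cases p, cases q, cases r) auto
  have s': "s' \<in> S" using vq P by (simp add: valid_def)
  obtain a a' t where t: "t \<in> S" and h1: "cg (a * s) t" and h2: "cg (a' * s') t" and h3: "cg (a * x) (a' * x')"
    using pq P by (auto elim: fe_E)
  obtain b b' u where u: "u \<in> S" and k1: "cg (b * s') u" and k2: "cg (b' * s'') u" and k3: "cg (b * x') (b' * x'')"
    using qr P by (auto elim: fe_E)
  obtain v w where v: "v \<in> S" and o: "cg (v * u) (w * t)" using ore'[OF t, of u] by blast
  have "cg ((w * a') * s') ((v * b) * s')"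
  proof -
    have "cg ((w * a') * s') (w * t)" using cg_lm[OF h2, of w] by (simp add: mult.assoc)
    also have "cg \<dots> (v * u)" by (rule cg_sym[OF o])
    also have "cg \<dots> ((v * b) * s')" using cg_lm[OF cg_sym[OF k1], of v] by (simp add: mult.assoc)
    finally show ?thesis .
  qed
  hence wa: "cg (w * a') (v * b)" by (rule cg_cancel[OF s'])
  show ?thesis unfolding P
  proof (rule fe_I[of "v * u" "w * a" _ "v * b'"])
    show "v * u \<in> S" using mul_S[OF v u] .
    have "cg ((w * a) * s) (w * t)" using cg_lm[OF h1, of w] by (simp add: mult.assoc)
    also have "cg \<dots> (v * u)" by (rule cg_sym[OF o])
    finally show "cg (w * a * s) (v * u)" .
    show "cg (v * b' * s'') (v * u)" using cg_lm[OF k2, of v] by (simp add: mult.assoc)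
    have "cg ((w * a) * x) (w * (a' * x'))" using cg_lm[OF h3, of w] by (simp add: mult.assoc)
    also have "cg \<dots> ((w * a') * x')" by (simp add: mult.assoc cg_refl)
    also have "cg \<dots> ((v * b) * x')" by (rule cg_rm[OF wa])
    also have "cg \<dots> (v * (b' * x''))" using cg_lm[OF k3, of v] by (simp add: mult.assoc)
    finally show "cg (w * a * x) (v * b' * x'')" by (simp add: mult.assoc)
  qed
qed

lemma fe_exp: "t \<in> S \<Longrightarrow> cg (a * s) t \<Longrightarrow> fe (s, x) (t, a * x)"
  by (rule fe_I[of t a _ 1]) (auto intro: cg_refl)

lemma fe_cgx: "s \<in> S \<Longrightarrow> cg x x' \<Longrightarrow> fe (s, x) (s, x')"
  by (rule fe_I[of s 1 _ 1]) (auto intro: cg_refl)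

end

context omod begin

lemma valid_addf: "valid p \<Longrightarrow> valid q \<Longrightarrow> valid (addf p q)"
  unfolding valid_def addf_def using orw mul_S by auto
lemma valid_act: "valid p \<Longrightarrow> valid (act r p)"
  unfolding valid_def act_def using orw by auto
lemma valid_dvs: "s0 \<in> S \<Longrightarrow> valid p \<Longrightarrow> valid (dvs s0 p)"
  unfolding valid_def dvs_def using mul_S by auto
lemma valid_negf: "valid p \<Longrightarrow> valid (negf p)"
  unfolding valid_def negf_def by auto
lemma valid_zf: "valid zf"
  unfolding valid_def zf_def using one_S by auto

lemma ADD:
  assumes s: "s \<in> S" and s': "s' \<in> S" and T: "T \<in> S" and ha: "cg (a * s) T" and hb: "cg (b * s') T"
  shows "fe (addf (s, x) (s', x')) (T, a * x + b * x')"
proof -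
  define t1 u1 where "t1 = fst (orw s s')" and "u1 = snd (orw s s')"
  have t1: "t1 \<in> S" and o1: "cg (t1 * s) (u1 * s')" using orw[OF s', of s] unfolding t1_def u1_def by auto
  have A: "addf (s, x) (s', x') = (t1 * s, t1 * x + u1 * x')" unfolding addf_def t1_def u1_def by simp
  have t1s: "t1 * s \<in> S" using mul_S[OF t1 s] .
  obtain v w where v: "v \<in> S" and o: "cg (v * (t1 * s)) (w * T)" using ore'[OF T, of "t1 * s"] by blast
  have "cg ((v * t1) * s) ((w * a) * s)"
  proof -
    have "cg ((v * t1) * s) (w * T)" using o by (simp add: mult.assoc)
    also have "cg \<dots> (w * (a * s))" by (rule cg_lm, rule cg_sym[OF ha])
    finally show ?thesis by (simp add: mult.assoc)
  qed
  hence e1: "cg (v * t1) (w * a)" by (rule cg_cancel[OF s])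
  have "cg ((v * u1) * s') ((w * b) * s')"
  proof -
    have "cg ((v * u1) * s') (v * (t1 * s))" using cg_lm[OF cg_sym[OF o1], of v] by (simp add: mult.assoc)
    also have "cg \<dots> (w * T)" by (rule o)
    also have "cg \<dots> (w * (b * s'))" by (rule cg_lm, rule cg_sym[OF hb])
    finally show ?thesis by (simp add: mult.assoc)
  qed
  hence e2: "cg (v * u1) (w * b)" by (rule cg_cancel[OF s'])
  show ?thesis unfolding A
  proof (rule fe_I[of "v * (t1 * s)" v _ w])
    show "v * (t1 * s) \<in> S" using mul_S[OF v t1s] .
    show "cg (v * (t1 * s)) (v * (t1 * s))" by (rule cg_refl)
    show "cg (w * T) (v * (t1 * s))" by (rule cg_sym[OF o])
    have "cg (v * (t1 * x + u1 * x')) ((v * t1) * x + (v * u1) * x')" by (rule cg_eq) (simp add: algebra_simps)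
    also have "cg \<dots> ((w * a) * x + (w * b) * x')" by (intro cg_add cg_rm e1 e2)
    also have "cg \<dots> (w * (a * x + b * x'))" by (rule cg_eq) (simp add: algebra_simps)
    finally show "cg (v * (t1 * x + u1 * x')) (w * (a * x + b * x'))" .
  qed
qed

lemma CD: assumes "s \<in> S" "s' \<in> S" shows "\<exists>T a b. T \<in> S \<and> cg (a * s) T \<and> cg (b * s') T"
proof -
  define t1 u1 where "t1 = fst (orw s s')" and "u1 = snd (orw s s')"
  have t1: "t1 \<in> S" and o1: "cg (t1 * s) (u1 * s')" using orw[OF assms(2), of s] unfolding t1_def u1_def by auto
  show ?thesis using mul_S[OF t1 assms(1)] cg_refl cg_sym[OF o1] by blast
qed

lemma ACT:
  assumes s: "s \<in> S" and t: "t \<in> S" and h: "cg (t * r) (r' * s)"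
  shows "fe (act r (s, x)) (t, r' * x)"
proof -
  define t1 r1 where "t1 = fst (orw r s)" and "r1 = snd (orw r s)"
  have t1: "t1 \<in> S" and o1: "cg (t1 * r) (r1 * s)" using orw[OF s, of r] unfolding t1_def r1_def by auto
  have A: "act r (s, x) = (t1, r1 * x)" unfolding act_def t1_def r1_def by simp
  obtain v w where v: "v \<in> S" and o: "cg (v * t1) (w * t)" using ore'[OF t, of t1] by blast
  have "cg ((v * r1) * s) ((w * r') * s)"
  proof -
    have "cg ((v * r1) * s) (v * (t1 * r))" using cg_lm[OF cg_sym[OF o1], of v] by (simp add: mult.assoc)
    also have "cg \<dots> ((w * t) * r)" using cg_rm[OF o, of r] by (simp add: mult.assoc)
    also have "cg \<dots> (w * (r' * s))" using cg_lm[OF h, of w] by (simp add: mult.assoc)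
    finally show ?thesis by (simp add: mult.assoc)
  qed
  hence e: "cg (v * r1) (w * r')" by (rule cg_cancel[OF s])
  show ?thesis unfolding A
  proof (rule fe_I[of "v * t1" v _ w])
    show "v * t1 \<in> S" using mul_S[OF v t1] .
    show "cg (v * t1) (v * t1)" by (rule cg_refl)
    show "cg (w * t) (v * t1)" by (rule cg_sym[OF o])
    show "cg (v * (r1 * x)) (w * (r' * x))" using cg_rm[OF e, of x] by (simp add: mult.assoc)
  qed
qed

lemma fe_trans3: "fe a b \<Longrightarrow> fe b k \<Longrightarrow> fe k d \<Longrightarrow> valid b \<Longrightarrow> valid k \<Longrightarrow> fe a d"
  using fe_trans by blast

lemma addf_resp_l:
  assumes vp: "valid p" and vp': "valid p'" and vq: "valid q" and e: "fe p p'"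
  shows "fe (addf p q) (addf p' q)"
proof -
  obtain s x s1 x1 s' x' where P: "p = (s, x)" "p' = (s1, x1)" "q = (s', x')" by (cases p, cases p', cases q) auto
  have s: "s \<in> S" and s1: "s1 \<in> S" and s': "s' \<in> S" using vp vp' vq P by (auto simp: valid_def)
  obtain a a1 t0 where t0: "t0 \<in> S" and h1: "cg (a * s) t0" and h2: "cg (a1 * s1) t0" and h3: "cg (a * x) (a1 * x1)"
    using e P by (auto elim: fe_E)
  obtain v w where v: "v \<in> S" and o: "cg (v * t0) (w * s')" using ore'[OF s', of t0] by blast
  have T: "v * t0 \<in> S" using mul_S[OF v t0] .
  have 1: "fe (addf (s, x) (s', x')) (v * t0, (v * a) * x + w * x')"
    by (rule ADD[OF s s' T]) (use cg_lm[OF h1, of v] cg_sym[OF o] in \<open>simp_all add: mult.assoc\<close>)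
  have 2: "fe (addf (s1, x1) (s', x')) (v * t0, (v * a1) * x1 + w * x')"
    by (rule ADD[OF s1 s' T]) (use cg_lm[OF h2, of v] cg_sym[OF o] in \<open>simp_all add: mult.assoc\<close>)
  have 3: "fe (v * t0, (v * a) * x + w * x') (v * t0, (v * a1) * x1 + w * x')"
    by (rule fe_cgx[OF T]) (use cg_lm[OF h3, of v] in \<open>simp add: mult.assoc cg_add cg_refl\<close>)
  show ?thesis unfolding P
    by (rule fe_trans3[OF 1 3 fe_sym[OF 2]]) (simp_all add: valid_def T)
qed

lemma addf_comm:
  assumes vp: "valid p" and vq: "valid q" shows "fe (addf p q) (addf q p)"
proof -
  obtain s x s' x' where P: "p = (s, x)" "q = (s', x')" by (cases p, cases q) auto
  have s: "s \<in> S" and s': "s' \<in> S" using vp vq P by (auto simp: valid_def)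
  define t1 u1 where "t1 = fst (orw s s')" and "u1 = snd (orw s s')"
  have t1: "t1 \<in> S" and o1: "cg (t1 * s) (u1 * s')" using orw[OF s', of s] unfolding t1_def u1_def by auto
  have A: "addf (s, x) (s', x') = (t1 * s, t1 * x + u1 * x')" unfolding addf_def t1_def u1_def by simp
  have T: "t1 * s \<in> S" using mul_S[OF t1 s] .
  have "fe (addf (s', x') (s, x)) (t1 * s, u1 * x' + t1 * x)"
    by (rule ADD[OF s' s T cg_sym[OF o1] cg_refl])
  hence "fe (addf (s', x') (s, x)) (t1 * s, t1 * x + u1 * x')" by (simp add: add.commute)
  then show ?thesis unfolding P A by (rule fe_sym)
qed

lemma addf_resp:
  assumes "valid p" "valid p'" "valid q" "valid q'" "fe p p'" "fe q q'"
  shows "fe (addf p q) (addf p' q')"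
proof -
  have 1: "fe (addf p q) (addf p' q)" by (rule addf_resp_l) (use assms in auto)
  have 2: "fe (addf p' q) (addf q p')" by (rule addf_comm) (use assms in auto)
  have 3: "fe (addf q p') (addf q' p')" by (rule addf_resp_l) (use assms in auto)
  have 4: "fe (addf q' p') (addf p' q')" by (rule addf_comm) (use assms in auto)
  show ?thesis using fe_trans3[OF 1 2 3] 4 fe_trans assms valid_addf by meson
qed

lemma addf_assoc:
  assumes vp: "valid p" and vq: "valid q" and vr: "valid r"
  shows "fe (addf (addf p q) r) (addf p (addf q r))"
proof -
  obtain s x s' x' s'' x'' where P: "p = (s, x)" "q = (s', x')" "r = (s'', x'')" by (cases p, cases q, cases r) auto
  have s: "s \<in> S" and s': "s' \<in> S" and s'': "s'' \<in> S" using vp vq vr P by (auto simp: valid_def)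
  obtain T1 a b where T1: "T1 \<in> S" and ha: "cg (a * s) T1" and hb: "cg (b * s') T1" using CD[OF s s'] by blast
  obtain v w where v: "v \<in> S" and o: "cg (v * T1) (w * s'')" using ore'[OF s'', of T1] by blast
  have T: "v * T1 \<in> S" using mul_S[OF v T1] .
  have va: "cg ((v * a) * s) (v * T1)" using cg_lm[OF ha, of v] by (simp add: mult.assoc)
  have vb: "cg ((v * b) * s') (v * T1)" using cg_lm[OF hb, of v] by (simp add: mult.assoc)
  have wc: "cg (w * s'') (v * T1)" by (rule cg_sym[OF o])
  have e1: "fe (addf (s, x) (s', x')) (T1, a * x + b * x')" by (rule ADD[OF s s' T1 ha hb])
  have e2: "fe (addf (addf (s, x) (s', x')) (s'', x'')) (addf (T1, a * x + b * x') (s'', x''))"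
    by (rule addf_resp_l[OF _ _ _ e1]) (use s s' s'' T1 valid_addf in \<open>auto simp: valid_def\<close>)
  have e3: "fe (addf (T1, a * x + b * x') (s'', x'')) (v * T1, v * (a * x + b * x') + w * x'')"
    by (rule ADD[OF T1 s'' T cg_refl wc])
  have e4: "fe (addf (s', x') (s'', x'')) (v * T1, (v * b) * x' + w * x'')"
    by (rule ADD[OF s' s'' T vb wc])
  have e5: "fe (addf (s, x) (addf (s', x') (s'', x''))) (addf (s, x) (v * T1, (v * b) * x' + w * x''))"
    by (rule addf_resp[OF _ _ _ _ fe_refl[OF s] e4]) (use s s' s'' T valid_addf in \<open>auto simp: valid_def\<close>)
  have e6: "fe (addf (s, x) (v * T1, (v * b) * x' + w * x'')) (v * T1, (v * a) * x + 1 * ((v * b) * x' + w * x''))"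
    by (rule ADD[OF s T T va]) (simp add: cg_refl)
  have eq: "v * (a * x + b * x') + w * x'' = (v * a) * x + 1 * ((v * b) * x' + w * x'')" by (simp add: algebra_simps)
  have vs: "valid (addf (T1, a * x + b * x') (s'', x''))" "valid (v * T1, v * (a * x + b * x') + w * x'')"
    "valid (addf (s, x) (v * T1, v * b * x' + w * x''))"
    using valid_addf s s'' T1 T by (auto simp: valid_def)
  have "fe (addf (addf (s, x) (s', x')) (s'', x'')) (v * T1, v * (a * x + b * x') + w * x'')"
    by (rule fe_trans[OF e2 e3 vs(1)])
  moreover have "fe (addf (s, x) (addf (s', x') (s'', x''))) (v * T1, v * (a * x + b * x') + w * x'')"
    unfolding eq by (rule fe_trans[OF e5 e6 vs(3)])
  ultimately show ?thesis unfolding P using fe_trans fe_sym vs(2) by blast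
qed

lemma addf_zero: assumes "valid p" shows "fe (addf zf p) p"
proof -
  obtain s x where P: "p = (s, x)" by (cases p) auto
  have s: "s \<in> S" using assms P by (simp add: valid_def)
  have "fe (addf (1, 0) (s, x)) (s, s * 0 + 1 * x)"
    by (rule ADD[OF one_S s s]) (simp_all add: cg_refl)
  then show ?thesis unfolding P zf_def by simp
qed

lemma addf_neg: assumes "valid p" shows "fe (addf (negf p) p) zf"
proof -
  obtain s x where P: "p = (s, x)" by (cases p) auto
  have s: "s \<in> S" using assms P by (simp add: valid_def)
  have 1: "fe (addf (s, - x) (s, x)) (s, 1 * (- x) + 1 * x)"
    by (rule ADD[OF s s s]) (simp_all add: cg_refl)
  have 2: "fe (s, 1 * (- x) + 1 * x) (1, 0)"
    by (rule fe_I[of s 1 _ s]) (simp_all add: cg_refl s)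
  show ?thesis unfolding P zf_def negf_def using fe_trans[OF 1 2] s by (simp add: valid_def)
qed

end

context omod begin

lemma act_resp:
  assumes vp: "valid p" and vp': "valid p'" and e: "fe p p'"
  shows "fe (act r p) (act r p')"
proof -
  obtain s x s1 x1 where P: "p = (s, x)" "p' = (s1, x1)" by (cases p, cases p') auto
  have s: "s \<in> S" and s1: "s1 \<in> S" using vp vp' P by (auto simp: valid_def)
  obtain a a1 t0 where t0: "t0 \<in> S" and h1: "cg (a * s) t0" and h2: "cg (a1 * s1) t0" and h3: "cg (a * x) (a1 * x1)"
    using e P by (auto elim: fe_E)
  obtain t r' where t: "t \<in> S" and o: "cg (t * r) (r' * t0)" using ore'[OF t0, of r] by blast
  have 1: "fe (act r (s, x)) (t, (r' * a) * x)"
  proof (rule ACT[OF s t])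
    have "cg (t * r) (r' * t0)" by (rule o)
    also have "cg \<dots> (r' * (a * s))" by (rule cg_lm, rule cg_sym[OF h1])
    finally show "cg (t * r) (r' * a * s)" by (simp add: mult.assoc)
  qed
  have 2: "fe (act r (s1, x1)) (t, (r' * a1) * x1)"
  proof (rule ACT[OF s1 t])
    have "cg (t * r) (r' * t0)" by (rule o)
    also have "cg \<dots> (r' * (a1 * s1))" by (rule cg_lm, rule cg_sym[OF h2])
    finally show "cg (t * r) (r' * a1 * s1)" by (simp add: mult.assoc)
  qed
  have 3: "fe (t, (r' * a) * x) (t, (r' * a1) * x1)"
    by (rule fe_cgx[OF t]) (use cg_lm[OF h3, of r'] in \<open>simp add: mult.assoc\<close>)
  show ?thesis unfolding P by (rule fe_trans3[OF 1 3 fe_sym[OF 2]]) (simp_all add: valid_def t)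
qed

lemma act_add:
  assumes vp: "valid p" and vq: "valid q"
  shows "fe (act r (addf p q)) (addf (act r p) (act r q))"
proof -
  obtain s x s' x' where P: "p = (s, x)" "q = (s', x')" by (cases p, cases q) auto
  have s: "s \<in> S" and s': "s' \<in> S" using vp vq P by (auto simp: valid_def)
  obtain T a b where T: "T \<in> S" and ha: "cg (a * s) T" and hb: "cg (b * s') T" using CD[OF s s'] by blast
  obtain t r' where t: "t \<in> S" and o: "cg (t * r) (r' * T)" using ore'[OF T, of r] by blast
  have e1: "fe (addf (s, x) (s', x')) (T, a * x + b * x')" by (rule ADD[OF s s' T ha hb])
  have e2: "fe (act r (addf (s, x) (s', x'))) (act r (T, a * x + b * x'))"
    by (rule act_resp[OF _ _ e1]) (use s s' T valid_addf in \<open>auto simp: valid_def\<close>)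
  have e3: "fe (act r (T, a * x + b * x')) (t, r' * (a * x + b * x'))" by (rule ACT[OF T t o])
  have e4: "fe (act r (s, x)) (t, (r' * a) * x)"
  proof (rule ACT[OF s t])
    have "cg (t * r) (r' * T)" by (rule o)
    also have "cg \<dots> (r' * (a * s))" by (rule cg_lm, rule cg_sym[OF ha])
    finally show "cg (t * r) (r' * a * s)" by (simp add: mult.assoc)
  qed
  have e5: "fe (act r (s', x')) (t, (r' * b) * x')"
  proof (rule ACT[OF s' t])
    have "cg (t * r) (r' * T)" by (rule o)
    also have "cg \<dots> (r' * (b * s'))" by (rule cg_lm, rule cg_sym[OF hb])
    finally show "cg (t * r) (r' * b * s')" by (simp add: mult.assoc)
  qed
  have e6: "fe (addf (act r (s, x)) (act r (s', x'))) (addf (t, (r' * a) * x) (t, (r' * b) * x'))"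
    by (rule addf_resp[OF _ _ _ _ e4 e5]) (use s s' t valid_act in \<open>auto simp: valid_def\<close>)
  have e7: "fe (addf (t, (r' * a) * x) (t, (r' * b) * x')) (t, 1 * ((r' * a) * x) + 1 * ((r' * b) * x'))"
    by (rule ADD[OF t t t]) (simp_all add: cg_refl)
  have eq: "r' * (a * x + b * x') = 1 * ((r' * a) * x) + 1 * ((r' * b) * x')" by (simp add: algebra_simps)
  have v1: "valid (act r (T, a * x + b * x'))" "valid (t, r' * (a * x + b * x'))"
     "valid (addf (t, (r' * a) * x) (t, (r' * b) * x'))"
    using valid_act valid_addf T t by (auto simp: valid_def)
  have L: "fe (act r (addf (s, x) (s', x'))) (t, r' * (a * x + b * x'))" by (rule fe_trans[OF e2 e3 v1(1)])
  have R: "fe (addf (act r (s, x)) (act r (s', x'))) (t, r' * (a * x + b * x'))"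
    unfolding eq by (rule fe_trans[OF e6 e7 v1(3)])
  show ?thesis unfolding P using fe_trans[OF L fe_sym[OF R] v1(2)] .
qed

lemma act_emb_add:
  assumes vp: "valid p" shows "fe (act (r1 + r2) p) (addf (act r1 p) (act r2 p))"
proof -
  obtain s x where P: "p = (s, x)" by (cases p) auto
  have s: "s \<in> S" using vp P by (simp add: valid_def)
  obtain t1 r1' where t1: "t1 \<in> S" and o1: "cg (t1 * r1) (r1' * s)" using ore'[OF s, of r1] by blast
  obtain t2 r2' where t2: "t2 \<in> S" and o2: "cg (t2 * (t1 * r2)) (r2' * s)" using ore'[OF s, of "t1 * r2"] by blast
  have T: "t2 * t1 \<in> S" using mul_S[OF t2 t1] .
  have c1: "cg ((t2 * t1) * r1) ((t2 * r1') * s)" using cg_lm[OF o1, of t2] by (simp add: mult.assoc)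
  have c2: "cg ((t2 * t1) * r2) (r2' * s)" using o2 by (simp add: mult.assoc)
  have e1: "fe (act r1 (s, x)) (t2 * t1, (t2 * r1') * x)" by (rule ACT[OF s T c1])
  have e2: "fe (act r2 (s, x)) (t2 * t1, r2' * x)" by (rule ACT[OF s T c2])
  have e3: "fe (act (r1 + r2) (s, x)) (t2 * t1, (t2 * r1' + r2') * x)"
    by (rule ACT[OF s T]) (use cg_add[OF c1 c2] in \<open>simp add: algebra_simps\<close>)
  have e4: "fe (addf (act r1 (s, x)) (act r2 (s, x))) (addf (t2 * t1, (t2 * r1') * x) (t2 * t1, r2' * x))"
    by (rule addf_resp[OF _ _ _ _ e1 e2]) (use s T valid_act in \<open>auto simp: valid_def\<close>)
  have e5: "fe (addf (t2 * t1, (t2 * r1') * x) (t2 * t1, r2' * x)) (t2 * t1, 1 * ((t2 * r1') * x) + 1 * (r2' * x))"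
    by (rule ADD[OF T T T]) (simp_all add: cg_refl)
  have eq: "(t2 * r1' + r2') * x = 1 * ((t2 * r1') * x) + 1 * (r2' * x)" by (simp add: algebra_simps)
  have v: "valid (addf (t2 * t1, (t2 * r1') * x) (t2 * t1, r2' * x))" "valid (t2 * t1, (t2 * r1' + r2') * x)"
    using valid_addf T by (auto simp: valid_def)
  have R: "fe (addf (act r1 (s, x)) (act r2 (s, x))) (t2 * t1, (t2 * r1' + r2') * x)"
    unfolding eq by (rule fe_trans[OF e4 e5 v(1)])
  show ?thesis unfolding P using fe_trans[OF e3 fe_sym[OF R] v(2)] .
qed

lemma act_emb_mul:
  assumes vp: "valid p" shows "fe (act (r1 * r2) p) (act r1 (act r2 p))"
proof -
  obtain s x where P: "p = (s, x)" by (cases p) auto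
  have s: "s \<in> S" using vp P by (simp add: valid_def)
  obtain t2 r2' where t2: "t2 \<in> S" and o2: "cg (t2 * r2) (r2' * s)" using ore'[OF s, of r2] by blast
  obtain t1 r1' where t1: "t1 \<in> S" and o1: "cg (t1 * r1) (r1' * t2)" using ore'[OF t2, of r1] by blast
  have e1: "fe (act r2 (s, x)) (t2, r2' * x)" by (rule ACT[OF s t2 o2])
  have e2: "fe (act r1 (act r2 (s, x))) (act r1 (t2, r2' * x))"
    by (rule act_resp[OF _ _ e1]) (use s t2 valid_act in \<open>auto simp: valid_def\<close>)
  have e3: "fe (act r1 (t2, r2' * x)) (t1, r1' * (r2' * x))" by (rule ACT[OF t2 t1 o1])
  have e4: "fe (act (r1 * r2) (s, x)) (t1, (r1' * r2') * x)"
  proof (rule ACT[OF s t1])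
    have "cg (t1 * (r1 * r2)) ((t1 * r1) * r2)" by (simp add: mult.assoc cg_refl)
    also have "cg \<dots> ((r1' * t2) * r2)" by (rule cg_rm[OF o1])
    also have "cg \<dots> (r1' * (r2' * s))" using cg_lm[OF o2, of r1'] by (simp add: mult.assoc)
    finally show "cg (t1 * (r1 * r2)) (r1' * r2' * s)" by (simp add: mult.assoc)
  qed
  have v: "valid (act r1 (t2, r2' * x))" "valid (t1, (r1' * r2') * x)" using valid_act t2 t1 by (auto simp: valid_def)
  have R: "fe (act r1 (act r2 (s, x))) (t1, (r1' * r2') * x)"
    using fe_trans[OF e2 e3 v(1)] by (simp add: mult.assoc)
  show ?thesis unfolding P using fe_trans[OF e4 fe_sym[OF R] v(2)] .
qed

lemma act_one: assumes "valid p" shows "fe (act 1 p) p"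
proof -
  obtain s x where P: "p = (s, x)" by (cases p) auto
  have s: "s \<in> S" using assms P by (simp add: valid_def)
  have "fe (act 1 (s, x)) (s, 1 * x)" by (rule ACT[OF s s]) (simp add: cg_refl)
  then show ?thesis unfolding P by simp
qed

lemma inv_r_f: assumes s0: "s0 \<in> S" and vp: "valid p" shows "fe (act s0 (dvs s0 p)) p"
proof -
  obtain s x where P: "p = (s, x)" by (cases p) auto
  have s: "s \<in> S" using vp P by (simp add: valid_def)
  have "fe (act s0 (s * s0, x)) (s, 1 * x)" by (rule ACT[OF mul_S[OF s s0] s]) (simp add: cg_refl)
  then show ?thesis unfolding P dvs_def by simp
qed

lemma inv_l_f: assumes s0: "s0 \<in> S" and vp: "valid p" shows "fe (dvs s0 (act s0 p)) p"
proof -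
  obtain s x where P: "p = (s, x)" by (cases p) auto
  have s: "s \<in> S" using vp P by (simp add: valid_def)
  define t1 r1 where "t1 = fst (orw s0 s)" and "r1 = snd (orw s0 s)"
  have t1: "t1 \<in> S" and o1: "cg (t1 * s0) (r1 * s)" using orw[OF s, of s0] unfolding t1_def r1_def by auto
  have A: "dvs s0 (act s0 (s, x)) = (t1 * s0, r1 * x)" unfolding act_def dvs_def t1_def r1_def by simp
  show ?thesis unfolding P A
    by (rule fe_I[of "t1 * s0" 1 _ r1]) (use mul_S[OF t1 s0] cg_sym[OF o1] in \<open>simp_all add: cg_refl\<close>)
qed

lemma dvs_resp: assumes s0: "s0 \<in> S" and e: "fe p p'" shows "fe (dvs s0 p) (dvs s0 p')"
proof -
  obtain s x s1 x1 where P: "p = (s, x)" "p' = (s1, x1)" by (cases p, cases p') auto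
  obtain a a1 t0 where t0: "t0 \<in> S" and h1: "cg (a * s) t0" and h2: "cg (a1 * s1) t0" and h3: "cg (a * x) (a1 * x1)"
    using e P by (auto elim: fe_E)
  show ?thesis unfolding P dvs_def
    by (rule fe_I[of "t0 * s0" a _ a1]) (use mul_S[OF t0 s0] cg_rm[OF h1, of s0] cg_rm[OF h2, of s0] h3 in \<open>simp_all add: mult.assoc\<close>)
qed

lemma dvs_add: assumes s0: "s0 \<in> S" and vp: "valid p" and vq: "valid q"
  shows "fe (dvs s0 (addf p q)) (addf (dvs s0 p) (dvs s0 q))"
proof -
  obtain s x s' x' where P: "p = (s, x)" "q = (s', x')" by (cases p, cases q) auto
  have s: "s \<in> S" and s': "s' \<in> S" using vp vq P by (auto simp: valid_def)
  define t1 u1 where "t1 = fst (orw s s')" and "u1 = snd (orw s s')"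
  have t1: "t1 \<in> S" and o1: "cg (t1 * s) (u1 * s')" using orw[OF s', of s] unfolding t1_def u1_def by auto
  have A: "dvs s0 (addf (s, x) (s', x')) = (t1 * s * s0, t1 * x + u1 * x')" unfolding addf_def dvs_def t1_def u1_def by simp
  have T: "t1 * s * s0 \<in> S" using mul_S[OF mul_S[OF t1 s] s0] .
  have "fe (addf (s * s0, x) (s' * s0, x')) (t1 * s * s0, t1 * x + u1 * x')"
    by (rule ADD[OF mul_S[OF s s0] mul_S[OF s' s0] T])
       (use cg_rm[OF cg_sym[OF o1], of s0] in \<open>simp_all add: mult.assoc cg_refl\<close>)
  then have "fe (t1 * s * s0, t1 * x + u1 * x') (addf (s * s0, x) (s' * s0, x'))" by (rule fe_sym)
  then show ?thesis unfolding P A by (simp add: dvs_def)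
qed

lemma negf_resp: "fe p p' \<Longrightarrow> fe (negf p) (negf p')"
  unfolding fe_def negf_def using cg_neg by fastforce

lemma negf_add: assumes "valid p" "valid q" shows "fe (negf (addf p q)) (addf (negf p) (negf q))"
proof -
  have "negf (addf p q) = addf (negf p) (negf q)" unfolding negf_def addf_def by (simp add: algebra_simps)
  then show ?thesis using fe_refl' valid_negf valid_addf assms by metis
qed

lemma zf_add: "fe zf (addf zf zf)"
proof -
  have "fe (addf (1, 0) (1, 0)) (1, 1 * 0 + 1 * 0)" by (rule ADD[OF one_S one_S one_S]) (simp_all add: cg_refl)
  then show ?thesis unfolding zf_def by (simp add: fe_sym)
qed

lemma swap4:
  assumes va: "valid a" and vb: "valid b" and vc: "valid k" and vd: "valid d"
  shows "fe (addf (addf a b) (addf k d)) (addf (addf a k) (addf b d))"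
proof -
  note V = valid_addf va vb vc vd
  have 1: "fe (addf (addf a b) (addf k d)) (addf a (addf b (addf k d)))" by (rule addf_assoc) (use V in auto)
  have 2: "fe (addf a (addf b (addf k d))) (addf a (addf (addf b k) d))"
    by (rule addf_resp[OF _ _ _ _ fe_refl'[OF va] fe_sym[OF addf_assoc]]) (use V in auto)
  have 3: "fe (addf a (addf (addf b k) d)) (addf a (addf (addf k b) d))"
    by (rule addf_resp[OF _ _ _ _ fe_refl'[OF va] addf_resp[OF _ _ _ _ addf_comm fe_refl'[OF vd]]]) (use V in auto)
  have 4: "fe (addf a (addf (addf k b) d)) (addf a (addf k (addf b d)))"
    by (rule addf_resp[OF _ _ _ _ fe_refl'[OF va] addf_assoc]) (use V in auto)
  have 5: "fe (addf a (addf k (addf b d))) (addf (addf a k) (addf b d))"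
    by (rule fe_sym, rule addf_assoc) (use V in auto)
  show ?thesis using 1 2 3 4 5 fe_trans V by meson
qed

end

context omod begin

definition good :: "('a \<times> 'a \<Rightarrow> 'a \<times> 'a) \<Rightarrow> bool" where
  "good f \<longleftrightarrow> (\<forall>p. valid p \<longrightarrow> valid (f p)) \<and>
     (\<forall>p q. valid p \<longrightarrow> valid q \<longrightarrow> fe p q \<longrightarrow> fe (f p) (f q)) \<and>
     (\<forall>p q. valid p \<longrightarrow> valid q \<longrightarrow> fe (f (addf p q)) (addf (f p) (f q)))"

lemma goodD: assumes "good f"
  shows "valid p \<Longrightarrow> valid (f p)"
    and "valid p \<Longrightarrow> valid q \<Longrightarrow> fe p q \<Longrightarrow> fe (f p) (f q)"
    and "valid p \<Longrightarrow> valid q \<Longrightarrow> fe (f (addf p q)) (addf (f p) (f q))"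
  using assms unfolding good_def by blast+

lemma good_act: "good (act r)"
  unfolding good_def using valid_act act_resp act_add by auto
lemma good_dvs: "s0 \<in> S \<Longrightarrow> good (dvs s0)"
  unfolding good_def using valid_dvs dvs_resp dvs_add by auto
lemma good_zf: "good (\<lambda>_. zf)"
  unfolding good_def using valid_zf zf_add fe_refl' by auto
lemma good_id: "good id"
  unfolding good_def using fe_refl' valid_addf by auto
lemma good_neg: assumes f: "good f" shows "good (negf \<circ> f)"
  unfolding good_def
proof (intro conjI allI impI)
  fix p assume "valid p" then show "valid ((negf \<circ> f) p)" using valid_negf goodD(1)[OF f] by auto
next
  fix p q assume vp: "valid p" and vq: "valid q" and e: "fe p q"
  show "fe ((negf \<circ> f) p) ((negf \<circ> f) q)" using negf_resp goodD(2)[OF f vp vq e] by auto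
next
  fix p q assume vp: "valid p" and vq: "valid q"
  note V = goodD(1)[OF f] valid_addf vp vq valid_negf
  have 1: "fe (negf (f (addf p q))) (negf (addf (f p) (f q)))"
    by (rule negf_resp, rule goodD(3)[OF f vp vq])
  have 2: "fe (negf (addf (f p) (f q))) (addf (negf (f p)) (negf (f q)))"
    by (rule negf_add) (use V in auto)
  show "fe ((negf \<circ> f) (addf p q)) (addf ((negf \<circ> f) p) ((negf \<circ> f) q))"
    using fe_trans[OF 1 2] V by auto
qed

lemma good_add: assumes f: "good f" and g: "good g" shows "good (\<lambda>p. addf (f p) (g p))"
  unfolding good_def
proof (intro conjI allI impI)
  fix p assume "valid p" then show "valid (addf (f p) (g p))" using valid_addf goodD(1)[OF f] goodD(1)[OF g] by auto
next
  fix p q assume vp: "valid p" and vq: "valid q" and e: "fe p q"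
  show "fe (addf (f p) (g p)) (addf (f q) (g q))"
    by (rule addf_resp) (use goodD[OF f] goodD[OF g] vp vq e in auto)
next
  fix p q assume vp: "valid p" and vq: "valid q"
  note V = goodD(1)[OF f] goodD(1)[OF g] valid_addf vp vq
  have 1: "fe (addf (f (addf p q)) (g (addf p q))) (addf (addf (f p) (f q)) (addf (g p) (g q)))"
    by (rule addf_resp) (use V goodD(3)[OF f] goodD(3)[OF g] in auto)
  have 2: "fe (addf (addf (f p) (f q)) (addf (g p) (g q))) (addf (addf (f p) (g p)) (addf (f q) (g q)))"
    by (rule swap4) (use V in auto)
  show "fe (addf (f (addf p q)) (g (addf p q))) (addf (addf (f p) (g p)) (addf (f q) (g q)))"
    by (rule fe_trans[OF 1 2]) (use V in auto)
qed

lemma good_comp: assumes f: "good f" and g: "good g" shows "good (f \<circ> g)"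
  unfolding good_def
proof (intro conjI allI impI)
  fix p assume "valid p" then show "valid ((f \<circ> g) p)" using goodD(1)[OF f] goodD(1)[OF g] by auto
next
  fix p q assume vp: "valid p" and vq: "valid q" and e: "fe p q"
  show "fe ((f \<circ> g) p) ((f \<circ> g) q)" using goodD[OF f] goodD[OF g] vp vq e by auto
next
  fix p q assume vp: "valid p" and vq: "valid q"
  note V = goodD(1)[OF f] goodD(1)[OF g] valid_addf vp vq
  have 1: "fe (f (g (addf p q))) (f (addf (g p) (g q)))"
    by (rule goodD(2)[OF f]) (use V goodD(3)[OF g] in auto)
  have 2: "fe (f (addf (g p) (g q))) (addf (f (g p)) (f (g q)))"
    by (rule goodD(3)[OF f]) (use V in auto)
  show "fe ((f \<circ> g) (addf p q)) (addf ((f \<circ> g) p) ((f \<circ> g) q))"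
    using fe_trans[OF 1 2] V by auto
qed

primrec FF :: "'a rexp \<Rightarrow> 'a \<times> 'a \<Rightarrow> 'a \<times> 'a" where
  "FF (Emb r) = act r"
| "FF (Xg a) = (if a \<in> S then dvs a else (\<lambda>_. zf))"
| "FF Zr = (\<lambda>_. zf)"
| "FF On = id"
| "FF (Ad t u) = (\<lambda>p. addf (FF t p) (FF u p))"
| "FF (Ng t) = negf \<circ> FF t"
| "FF (Ml t u) = FF t \<circ> FF u"

lemma good_FF: "good (FF t)"
  apply (induction t) apply (simp_all only: FF.simps good_act good_dvs good_zf good_id good_neg good_add good_comp split: if_split)
  apply (simp add: good_dvs) done

lemma FF_valid: "valid p \<Longrightarrow> valid (FF t p)"
  using goodD(1)[OF good_FF] .

lemma FF_sound0: "loc_eq S t u \<Longrightarrow> \<forall>p. valid p \<longrightarrow> fe (FF t p) (FF u p)"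
proof (induction rule: loc_eq.induct)
  case (refl t) then show ?case using fe_refl' FF_valid by blast
next
  case (sym t u) then show ?case using fe_sym by blast
next
  case (trans t u v) then show ?case using fe_trans FF_valid by blast
next
  case (cong_add t t' u u')
  show ?case
  proof (intro allI impI)
    fix p assume vp: "valid p"
    show "fe (FF (Ad t u) p) (FF (Ad t' u') p)" unfolding FF.simps
      by (rule addf_resp) (use cong_add.IH vp FF_valid in blast)+
  qed
next
  case (cong_neg t t') then show ?case using negf_resp by simp
next
  case (cong_mul t t' u u')
  show ?case
  proof (intro allI impI)
    fix p assume vp: "valid p"
    have 1: "fe (FF t (FF u p)) (FF t (FF u' p))"
      by (rule goodD(2)[OF good_FF]) (use cong_mul.IH vp FF_valid in blast)+
    have 2: "fe (FF t (FF u' p)) (FF t' (FF u' p))" using cong_mul.IH vp FF_valid by blast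
    show "fe (FF (Ml t u) p) (FF (Ml t' u') p)" using fe_trans[OF 1 2] vp FF_valid by simp
  qed
next
  case (add_assoc t u v) then show ?case using addf_assoc FF_valid by simp
next
  case (add_comm t u) then show ?case using addf_comm FF_valid by simp
next
  case (add_zero t) then show ?case using addf_zero FF_valid by simp
next
  case (add_neg t) then show ?case using addf_neg FF_valid by simp
next
  case (mul_assoc t u v) then show ?case using fe_refl' FF_valid by simp
next
  case (mul_one_l t) then show ?case using fe_refl' FF_valid by simp
next
  case (mul_one_r t) then show ?case using fe_refl' FF_valid by simp
next
  case (distr_l t u v) then show ?case using goodD(3)[OF good_FF] FF_valid by simp
next
  case (distr_r t u v) then show ?case using fe_refl' FF_valid valid_addf by simp
next
  case (emb_add a b) then show ?case using act_emb_add by simp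
next
  case (emb_mul a b) then show ?case using act_emb_mul by simp
next
  case emb_one then show ?case using act_one by simp
next
  case (inv_r s) then show ?case using inv_r_f by simp
next
  case (inv_l s) then show ?case using inv_l_f by simp
next
  case (kill a) then show ?case using fe_refl' valid_zf by simp
qed

lemma FF_sound: "loc_eq S t u \<Longrightarrow> valid p \<Longrightarrow> fe (FF t p) (FF u p)"
  using FF_sound0 by blast

lemma nontriv: "\<not> loc_eq S On Zr"
proof
  assume "loc_eq S On Zr"
  from FF_sound[OF this, of "(1, 1)"] have "fe (1, 1) (1, 0)" using one_S by (simp add: valid_def zf_def)
  then obtain a a' t where t: "t \<in> S" and h1: "cg (a * 1) t" and h3: "cg (a * 1) (a' * 0)" by (auto elim: fe_E)
  have "cg t 0" using cg_trans[OF cg_sym[OF h1] h3] by simp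
  then have "t \<in> c" by (simp add: cg_def)
  then show False using disj t by blast
qed

lemma ass_sub: "ass S \<subseteq> c"
proof
  fix r assume "r \<in> ass S"
  hence "loc_eq S (Emb r) Zr" by (simp add: ass_def)
  from FF_sound[OF this, of "(1, 1)"] have e: "fe (act r (1, 1)) (1, 0)" using one_S by (simp add: valid_def zf_def)
  define t1 r1 where "t1 = fst (orw r 1)" and "r1 = snd (orw r 1)"
  have t1: "t1 \<in> S" and o1: "cg (t1 * r) (r1 * 1)" using orw[OF one_S, of r] unfolding t1_def r1_def by auto
  have A: "act r (1, 1) = (t1, r1)" unfolding act_def t1_def r1_def by simp
  obtain a a' t where t: "t \<in> S" and h1: "cg (a * t1) t" and h3: "cg (a * r1) (a' * 0)"
    using e unfolding A by (auto elim: fe_E)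
  have "cg (t * r) ((a * t1) * r)" by (rule cg_rm, rule cg_sym[OF h1])
  also have "cg \<dots> (a * (r1 * 1))" using cg_lm[OF o1, of a] by (simp add: mult.assoc)
  also have "cg \<dots> 0" using h3 by simp
  finally show "r \<in> c" by (rule cg_zero_l[OF t])
qed

end


lemma idealD: assumes "ideal b"
  shows "0 \<in> b" "x \<in> b \<Longrightarrow> y \<in> b \<Longrightarrow> x + y \<in> b" "x \<in> b \<Longrightarrow> - x \<in> b"
    "x \<in> b \<Longrightarrow> r * x \<in> b" "x \<in> b \<Longrightarrow> x * r \<in> b"
  using assms unfolding ideal_def by auto

lemma ideal_diff: "ideal b \<Longrightarrow> x \<in> b \<Longrightarrow> y \<in> b \<Longrightarrow> x - y \<in> b"
  using idealD[of b] by (metis diff_conv_add_uminus)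

lemma lL_sub_Lpl:
  assumes "S \<in> lL_l" shows "S \<in> Lpl"
proof -
  let ?b = "la_ideal S"
  have ms: "mult_set S" and disjb: "\<And>s. s \<in> S \<Longrightarrow> s \<notin> ?b"
    and oreb: "\<And>r s. s \<in> S \<Longrightarrow> \<exists>s'\<in>S. \<exists>r'. s' * r - r' * s \<in> ?b"
    using assms unfolding lL_l_def left_ore_mod_def by auto
  have one: "1 \<in> S" and mul: "\<And>a b. a \<in> S \<Longrightarrow> b \<in> S \<Longrightarrow> a * b \<in> S" using ms by (auto simp: mult_set_def)
  have ib: "ideal ?b" by (rule la_ideal_ideal)
  note B = idealD[OF ib]
  define c where "c = {x. \<exists>s\<in>S. s * x \<in> ?b}"
  have bc: "?b \<subseteq> c" unfolding c_def using one by force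
  have ic: "ideal c" unfolding ideal_def
  proof (intro conjI ballI allI)
    show "0 \<in> c" unfolding c_def using one B(1) by force
  next
    fix x y assume "x \<in> c" "y \<in> c"
    then obtain s s' where s: "s \<in> S" "s * x \<in> ?b" and s': "s' \<in> S" "s' * y \<in> ?b" unfolding c_def by blast
    obtain t u where t: "t \<in> S" and o: "t * s - u * s' \<in> ?b" using oreb[OF s'(1), of s] by blast
    have "(t * s) * (x + y) = t * (s * x) + ((t * s - u * s') * y + u * (s' * y))" by (simp add: algebra_simps)
    also have "\<dots> \<in> ?b" by (rule B(2)[OF B(4)[OF s(2)] B(2)[OF B(5)[OF o] B(4)[OF s'(2)]]])
    finally show "x + y \<in> c" unfolding c_def using mul[OF t s(1)] by blast
  next
    fix x assume "x \<in> c"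
    then obtain s where s: "s \<in> S" "s * x \<in> ?b" unfolding c_def by blast
    have "s * (- x) = - (s * x)" by simp
    then show "- x \<in> c" unfolding c_def using s B(3)[OF s(2)] by auto
  next
    fix x r assume "x \<in> c"
    then obtain s where s: "s \<in> S" "s * x \<in> ?b" unfolding c_def by blast
    obtain t r' where t: "t \<in> S" and o: "t * r - r' * s \<in> ?b" using oreb[OF s(1), of r] by blast
    have "t * (r * x) = (t * r - r' * s) * x + r' * (s * x)" by (simp add: algebra_simps)
    also have "\<dots> \<in> ?b" by (rule B(2)[OF B(5)[OF o] B(4)[OF s(2)]])
    finally show "r * x \<in> c" unfolding c_def using t by blast
    have "s * (x * r) = (s * x) * r" by (simp add: mult.assoc)
    then show "x * r \<in> c" unfolding c_def using s B(5)[OF s(2), of r] by (metis (no_types, lifting) mem_Collect_eq)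
  qed
  have om: "omod S c"
  proof
    show "ideal c" by (rule ic)
    show "mult_set S" by (rule ms)
  next
    fix s assume s: "s \<in> S"
    show "s \<notin> c"
    proof
      assume "s \<in> c"
      then obtain t where "t \<in> S" "t * s \<in> ?b" unfolding c_def by blast
      then show False using disjb mul s by blast
    qed
    show "lreg_mod c s" unfolding lreg_mod_def
    proof (intro allI impI)
      fix x assume "x * s \<in> c"
      then obtain t where t: "t \<in> S" "t * (x * s) \<in> ?b" unfolding c_def by blast
      have "(t * x) * s \<in> ?b" using t by (simp add: mult.assoc)
      then have "t * x \<in> ?b" using la_ideal_lreg[OF s] unfolding lreg_mod_def by blast
      then show "x \<in> c" unfolding c_def using t by blast
    qed
    show "rreg_mod c s" unfolding rreg_mod_def
    proof (intro allI impI)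
      fix x assume "s * x \<in> c"
      then obtain t where t: "t \<in> S" "t * (s * x) \<in> ?b" unfolding c_def by blast
      then have "(t * s) * x \<in> ?b" by (simp add: mult.assoc)
      then show "x \<in> c" unfolding c_def using mul[OF t(1) s] by blast
    qed
  next
    fix r s assume "s \<in> S"
    then show "\<exists>s'\<in>S. \<exists>r'. s' * r - r' * s \<in> c" using oreb bc by blast
  qed
  have nt: "\<not> loc_eq S On Zr" by (rule omod.nontriv[OF om])
  have assc: "ass S \<subseteq> c" by (rule omod.ass_sub[OF om])
  have ca: "c \<subseteq> a_ideal S"
  proof
    fix x assume "x \<in> c"
    then obtain s where s: "s \<in> S" "s * x \<in> ?b" unfolding c_def by blast
    then have "s * x \<in> a_ideal S" using la_sub_a by blast
    then show "x \<in> a_ideal S" using a_ideal_rreg[OF s(1)] unfolding rreg_mod_def by blast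
  qed
  have eq: "ass S = a_ideal S" using assc ca a_sub_ass by blast
  have bass: "?b \<subseteq> ass S" using la_sub_a a_sub_ass by blast
  have ll: "left_localizable S"
    unfolding left_localizable_def
  proof (intro conjI allI)
    show "mult_set S" by (rule ms)
    show "\<not> loc_eq S On Zr" by (rule nt)
    fix t
    show "\<exists>s\<in>S. \<exists>r. loc_eq S t (Ml (Xg s) (Emb r))"
    proof (rule left_repr[OF ms])
      fix r s assume "s \<in> S"
      then obtain s' r' where "s' \<in> S" "s' * r - r' * s \<in> ?b" using oreb by blast
      then show "\<exists>s'\<in>S. \<exists>r'. loc_eq S (Emb (s' * r)) (Emb (r' * s))"
        using bass le_emb_diff unfolding ass_def by blast
    qed
  qed
  show ?thesis unfolding Lpl_def Ll_def using ll eq by simp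
qed

lemma LOre_sub_lL: assumes "S \<in> LOre_l" shows "S \<in> lL_l"
proof -
  have ll: "left_localizable S" and ore: "\<And>r s. s \<in> S \<Longrightarrow> \<exists>s'\<in>S. \<exists>r'. s' * r = r' * s"
    using assms unfolding LOre_l_def Ll_def Ore_l_def by auto
  have ms: "mult_set S" and nt: "\<not> loc_eq S On Zr" using ll unfolding left_localizable_def by auto
  have sub: "la_ideal S \<subseteq> ass S" using la_sub_a a_sub_ass by blast
  show ?thesis unfolding lL_l_def left_ore_mod_def
  proof (intro CollectI conjI ballI allI)
    show "mult_set S" by (rule ms)
    fix s assume s: "s \<in> S"
    show "s \<notin> la_ideal S" using ass_disj[OF nt s] sub by blast
    fix r
    obtain s' r' where "s' \<in> S" "s' * r = r' * s" using ore[OF s] by blast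
    then show "\<exists>s'\<in>S. \<exists>r'. s' * r - r' * s \<in> la_ideal S" using idealD(1)[OF la_ideal_ideal[of S]] by (metis diff_self)
  qed
qed

lemma Ore_sub_lL: assumes "S \<in> Ore" shows "S \<in> lL_l"
proof -
  have ms: "mult_set S" and orel: "\<And>r s. s \<in> S \<Longrightarrow> \<exists>s'\<in>S. \<exists>r'. s' * r = r' * s"
    and orer: "\<And>r s. s \<in> S \<Longrightarrow> \<exists>s'\<in>S. \<exists>r'. r * s' = s * r'"
    using assms unfolding Ore_def Ore_l_def Ore_r_def by auto
  have one: "1 \<in> S" and mul: "\<And>a b. a \<in> S \<Longrightarrow> b \<in> S \<Longrightarrow> a * b \<in> S" and z: "0 \<notin> S"
    using ms by (auto simp: mult_set_def)
  define c where "c = {x. \<exists>s\<in>S. x * s = 0}"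
  have ic: "ideal c" unfolding ideal_def
  proof (intro conjI ballI allI)
    show "0 \<in> c" unfolding c_def using one by force
  next
    fix x y assume "x \<in> c" "y \<in> c"
    then obtain s s' where s: "s \<in> S" "x * s = 0" and s': "s' \<in> S" "y * s' = 0" unfolding c_def by blast
    obtain t u where t: "t \<in> S" and o: "s * t = s' * u" using orer[OF s'(1), of s] by blast
    have "(x + y) * (s * t) = (x * s) * t + (y * s') * u" by (simp add: algebra_simps o[symmetric])
    then have "(x + y) * (s * t) = 0" using s s' by simp
    then show "x + y \<in> c" unfolding c_def using mul[OF s(1) t] by blast
  next
    fix x assume "x \<in> c"
    then obtain s where s: "s \<in> S" "x * s = 0" unfolding c_def by blast
    then show "- x \<in> c" unfolding c_def by force
  next
    fix x r assume "x \<in> c"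
    then obtain s where s: "s \<in> S" "x * s = 0" unfolding c_def by blast
    have "r * x * s = 0" using s by (simp add: mult.assoc)
    then show "r * x \<in> c" unfolding c_def using s by blast
    obtain t u where t: "t \<in> S" and o: "r * t = s * u" using orer[OF s(1), of r] by blast
    have "x * r * t = (x * s) * u" using o by (simp add: mult.assoc)
    then have "x * r * t = 0" using s by simp
    then show "x * r \<in> c" unfolding c_def using t by blast
  qed
  have lc: "la_ideal S \<subseteq> c"
  proof (rule la_ideal_least[OF ic])
    fix s assume s: "s \<in> S"
    show "lreg_mod c s" unfolding lreg_mod_def
    proof (intro allI impI)
      fix x assume "x * s \<in> c"
      then obtain t where t: "t \<in> S" "x * s * t = 0" unfolding c_def by blast
      then have "x * (s * t) = 0" by (simp add: mult.assoc)
      then show "x \<in> c" unfolding c_def using mul[OF s t(1)] by blast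
    qed
  qed
  show ?thesis unfolding lL_l_def left_ore_mod_def
  proof (intro CollectI conjI ballI allI)
    show "mult_set S" by (rule ms)
    fix s assume s: "s \<in> S"
    show "s \<notin> la_ideal S"
    proof
      assume "s \<in> la_ideal S"
      then obtain t where t: "t \<in> S" "s * t = 0" using lc unfolding c_def by blast
      have "s * t \<in> S" by (rule mul[OF s t(1)])
      then show False using t(2) z by simp
    qed
    fix r
    obtain s' r' where "s' \<in> S" "s' * r = r' * s" using orel[OF s] by blast
    then show "\<exists>s'\<in>S. \<exists>r'. s' * r - r' * s \<in> la_ideal S" using idealD(1)[OF la_ideal_ideal[of S]] by (metis diff_self)
  qed
qed



datatype 'a opp = Opp (unO: 'a)

instantiation opp :: (ring_1) ring_1
begin
definition "0 = Opp 0"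
definition "1 = Opp 1"
definition "x + y = Opp (unO x + unO y)"
definition "x - y = Opp (unO x - unO y)"
definition "- x = Opp (- unO x)"
definition "x * y = Opp (unO y * unO x)"
instance
  by standard (simp_all add: zero_opp_def one_opp_def plus_opp_def minus_opp_def uminus_opp_def times_opp_def
      opp.expand algebra_simps)
end

lemma opp_simps[simp]:
  "Opp a + Opp b = Opp (a + b)" "Opp a * Opp b = Opp (b * a)" "- Opp a = Opp (- a)"
  "Opp a - Opp b = Opp (a - b)" "(0 :: 'a::ring_1 opp) = Opp 0" "(1 :: 'a::ring_1 opp) = Opp 1"
  by (simp_all add: zero_opp_def one_opp_def plus_opp_def minus_opp_def uminus_opp_def times_opp_def)

lemma unO_simps[simp]:
  "unO (x + y) = unO x + unO y" "unO (x * y) = unO y * unO x" "unO (- x) = - unO x"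
  "unO (x - y) = unO x - unO y" "unO (0 :: 'a::ring_1 opp) = 0" "unO (1 :: 'a::ring_1 opp) = 1"
  by (simp_all add: zero_opp_def one_opp_def plus_opp_def minus_opp_def uminus_opp_def times_opp_def)

definition os :: "'a set \<Rightarrow> 'a opp set" where "os b = {x. unO x \<in> b}"

lemma os_mem[simp]: "x \<in> os b \<longleftrightarrow> unO x \<in> b" by (simp add: os_def)
lemma Opp_mem_os: "Opp a \<in> os b \<longleftrightarrow> a \<in> b" by simp

lemma all_opp: "(\<forall>x :: 'a opp. P x) \<longleftrightarrow> (\<forall>a. P (Opp a))"
  by (metis opp.collapse)
lemma ex_opp: "(\<exists>x :: 'a opp. P x) \<longleftrightarrow> (\<exists>a. P (Opp a))"
  by (metis opp.collapse)
lemma all_os: "(\<forall>B :: 'a opp set. P B) \<longleftrightarrow> (\<forall>b. P (os b))"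
proof
  assume h: "\<forall>b. P (os b)"
  show "\<forall>B. P B"
  proof
    fix B :: "'a opp set"
    have "B = os {a. Opp a \<in> B}" by (auto simp: os_def)
    then show "P B" using h by metis
  qed
qed auto

primrec rv :: "'a rexp \<Rightarrow> 'a opp rexp" where
  "rv (Emb a) = Emb (Opp a)" | "rv (Xg a) = Xg (Opp a)" | "rv Zr = Zr" | "rv On = On"
| "rv (Ad t u) = Ad (rv t) (rv u)" | "rv (Ng t) = Ng (rv t)" | "rv (Ml t u) = Ml (rv u) (rv t)"

primrec rv' :: "'a opp rexp \<Rightarrow> 'a rexp" where
  "rv' (Emb a) = Emb (unO a)" | "rv' (Xg a) = Xg (unO a)" | "rv' Zr = Zr" | "rv' On = On"
| "rv' (Ad t u) = Ad (rv' t) (rv' u)" | "rv' (Ng t) = Ng (rv' t)" | "rv' (Ml t u) = Ml (rv' u) (rv' t)"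

lemma rv_rv'[simp]: "rv (rv' t) = t" by (induction t) auto
lemma rv'_rv[simp]: "rv' (rv t) = t" by (induction t) auto

lemma le_rv: "loc_eq S t u \<Longrightarrow> loc_eq (os (S :: 'a::ring_1 set)) (rv t) (rv u)"
proof (induction rule: loc_eq.induct)
  case (mul_assoc t u v) then show ?case by (simp add: loc_eq.sym loc_eq.mul_assoc)
next
  case (mul_one_l t) then show ?case by (simp add: loc_eq.mul_one_r)
next
  case (mul_one_r t) then show ?case by (simp add: loc_eq.mul_one_l)
next
  case (distr_l t u v) then show ?case by (simp add: loc_eq.distr_r)
next
  case (distr_r t u v) then show ?case by (simp add: loc_eq.distr_l)
next
  case (emb_add a b) then show ?case using loc_eq.emb_add[of "os S" "Opp a" "Opp b"] by simp
next
  case (emb_mul a b) then show ?case using loc_eq.emb_mul[of "os S" "Opp b" "Opp a"] by simp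
next
  case emb_one then show ?case using loc_eq.emb_one[of "os S"] by simp
next
  case (inv_r s) then show ?case using loc_eq.inv_l[of "Opp s" "os S"] by simp
next
  case (inv_l s) then show ?case using loc_eq.inv_r[of "Opp s" "os S"] by simp
next
  case (kill a) then show ?case using loc_eq.kill[of "Opp a" "os S"] by simp
qed (auto intro: loc_eq.intros)

lemma le_rv': "loc_eq (os (S :: 'a::ring_1 set)) t u \<Longrightarrow> loc_eq S (rv' t) (rv' u)"
proof (induction rule: loc_eq.induct)
  case (mul_assoc t u v) then show ?case by (simp add: loc_eq.sym loc_eq.mul_assoc)
next
  case (mul_one_l t) then show ?case by (simp add: loc_eq.mul_one_r)
next
  case (mul_one_r t) then show ?case by (simp add: loc_eq.mul_one_l)
next
  case (distr_l t u v) then show ?case by (simp add: loc_eq.distr_r)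
next
  case (distr_r t u v) then show ?case by (simp add: loc_eq.distr_l)
next
  case (emb_add a b) then show ?case using loc_eq.emb_add[of S "unO a" "unO b"] by simp
next
  case (emb_mul a b) then show ?case using loc_eq.emb_mul[of S "unO b" "unO a"] by simp
next
  case emb_one then show ?case using loc_eq.emb_one[of S] by simp
next
  case (inv_r s) then show ?case using loc_eq.inv_l[of "unO s" S] by simp
next
  case (inv_l s) then show ?case using loc_eq.inv_r[of "unO s" S] by simp
next
  case (kill a) then show ?case using loc_eq.kill[of "unO a" S] by simp
qed (auto intro: loc_eq.intros)

lemma le_os_iff: "loc_eq (os S) (rv t) (rv u) \<longleftrightarrow> loc_eq S t u"
  using le_rv le_rv' rv'_rv by metis

lemma le_os_iff': "loc_eq (os S) t u \<longleftrightarrow> loc_eq S (rv' t) (rv' u)"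
  using le_os_iff[of S "rv' t" "rv' u"] by simp



lemma ball_os: "(\<forall>x\<in>os S. P x) \<longleftrightarrow> (\<forall>a\<in>S. P (Opp a))"
  unfolding Ball_def by (simp add: all_opp)
lemma bex_os: "(\<exists>x\<in>os S. P x) \<longleftrightarrow> (\<exists>a\<in>S. P (Opp a))"
  unfolding Bex_def by (simp add: ex_opp)

lemma Inter_os: "(x \<in> \<Inter>{B. P B}) \<longleftrightarrow> (\<forall>b. P (os b) \<longrightarrow> x \<in> os b)"
  using all_os[where P = "\<lambda>B. P B \<longrightarrow> x \<in> B"] by simp

lemma ms_os: "mult_set (os S) \<longleftrightarrow> mult_set (S :: 'a::ring_1 set)"
  unfolding mult_set_def by (simp add: ball_os) blast

lemma ass_os: "ass (os S) = os (ass (S :: 'a::ring_1 set))"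
proof -
  have "x \<in> ass (os S) \<longleftrightarrow> x \<in> os (ass S)" for x :: "'a opp"
    unfolding ass_def by (simp add: le_os_iff')
  then show ?thesis by blast
qed

lemma ideal_os: "ideal (os b) \<longleftrightarrow> ideal (b :: 'a::ring_1 set)"
  unfolding ideal_def by (simp add: ball_os all_opp) blast

lemma lreg_os: "lreg_mod (os b) (Opp s) \<longleftrightarrow> rreg_mod (b :: 'a::ring_1 set) s"
  unfolding lreg_mod_def rreg_mod_def by (simp add: all_opp)
lemma rreg_os: "rreg_mod (os b) (Opp s) \<longleftrightarrow> lreg_mod (b :: 'a::ring_1 set) s"
  unfolding lreg_mod_def rreg_mod_def by (simp add: all_opp)

lemma la_os: "la_ideal (os S) = os (ra_ideal (S :: 'a::ring_1 set))"
proof -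
  have "x \<in> la_ideal (os S) \<longleftrightarrow> x \<in> os (ra_ideal S)" for x :: "'a opp"
    unfolding la_ideal_def ra_ideal_def
    by (simp only: Inter_os ideal_os ball_os lreg_os os_mem) blast
  then show ?thesis by blast
qed

lemma ra_os: "ra_ideal (os S) = os (la_ideal (S :: 'a::ring_1 set))"
proof -
  have "x \<in> ra_ideal (os S) \<longleftrightarrow> x \<in> os (la_ideal S)" for x :: "'a opp"
    unfolding la_ideal_def ra_ideal_def
    by (simp only: Inter_os ideal_os ball_os rreg_os os_mem) blast
  then show ?thesis by blast
qed

lemma a_os: "a_ideal (os S) = os (a_ideal (S :: 'a::ring_1 set))"
proof -
  have "x \<in> a_ideal (os S) \<longleftrightarrow> x \<in> os (a_ideal S)" for x :: "'a opp"
    unfolding a_ideal_def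
    by (simp only: Inter_os ideal_os ball_os rreg_os lreg_os os_mem) blast
  then show ?thesis by blast
qed

lemma os_inj: "os a = os b \<longleftrightarrow> a = b"
proof
  assume "os a = os b"
  then have "Opp x \<in> os a \<longleftrightarrow> Opp x \<in> os b" for x by simp
  then show "a = b" by auto
qed simp

lemma lore_os: "left_ore_mod (os b) (os S) \<longleftrightarrow> right_ore_mod b (S :: 'a::ring_1 set)"
  unfolding left_ore_mod_def right_ore_mod_def by (simp add: all_opp ex_opp ball_os bex_os)

lemma Ore_l_os: "os S \<in> Ore_l \<longleftrightarrow> (S :: 'a::ring_1 set) \<in> Ore_r"
  unfolding Ore_l_def Ore_r_def by (simp add: all_opp ex_opp ms_os ball_os bex_os)
lemma Ore_r_os: "os S \<in> Ore_r \<longleftrightarrow> (S :: 'a::ring_1 set) \<in> Ore_l"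
  unfolding Ore_l_def Ore_r_def by (simp add: all_opp ex_opp ms_os ball_os bex_os)

lemma lloc_os: "left_localizable (os S) \<longleftrightarrow> right_localizable (S :: 'a::ring_1 set)"
proof -
  have A: "(\<forall>t. \<exists>s\<in>os S. \<exists>r. loc_eq (os S) t (Ml (Xg s) (Emb r))) \<longleftrightarrow>
        (\<forall>t. \<exists>s\<in>S. \<exists>r. loc_eq S t (Ml (Emb r) (Xg s)))"
  proof
    assume h: "\<forall>t. \<exists>s\<in>os S. \<exists>r. loc_eq (os S) t (Ml (Xg s) (Emb r))"
    show "\<forall>t. \<exists>s\<in>S. \<exists>r. loc_eq S t (Ml (Emb r) (Xg s))"
    proof
      fix t
      obtain s r where "s \<in> os S" "loc_eq (os S) (rv t) (Ml (Xg s) (Emb r))" using h by blast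
      then show "\<exists>s\<in>S. \<exists>r. loc_eq S t (Ml (Emb r) (Xg s))" by (auto simp: le_os_iff')
    qed
  next
    assume h: "\<forall>t. \<exists>s\<in>S. \<exists>r. loc_eq S t (Ml (Emb r) (Xg s))"
    show "\<forall>t. \<exists>s\<in>os S. \<exists>r. loc_eq (os S) t (Ml (Xg s) (Emb r))"
    proof
      fix t
      obtain s r where "s \<in> S" "loc_eq S (rv' t) (Ml (Emb r) (Xg s))" using h by blast
      then have "Opp s \<in> os S" "loc_eq (os S) t (Ml (Xg (Opp s)) (Emb (Opp r)))" by (auto simp: le_os_iff')
      then show "\<exists>s\<in>os S. \<exists>r. loc_eq (os S) t (Ml (Xg s) (Emb r))" by blast
    qed
  qed
  have B: "loc_eq (os S) On Zr \<longleftrightarrow> loc_eq S On Zr" by (simp add: le_os_iff')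
  show ?thesis unfolding left_localizable_def right_localizable_def using A B ms_os by blast
qed

lemma lL_os: "os S \<in> lL_l \<longleftrightarrow> (S :: 'a::ring_1 set) \<in> rL_r"
  unfolding lL_l_def rL_r_def by (simp add: ms_os la_os lore_os)

lemma Lpl_os: "os S \<in> Lpl \<longleftrightarrow> (S :: 'a::ring_1 set) \<in> Lpr"
  unfolding Lpl_def Lpr_def Ll_def Lr_def by (simp add: lloc_os ass_os a_os os_inj)

lemma LOre_os: "os S \<in> LOre_l \<longleftrightarrow> (S :: 'a::ring_1 set) \<in> LOre_r"
  unfolding LOre_l_def LOre_r_def Ll_def Lr_def using lloc_os Ore_l_os by blast

lemma Ore_os: "os S \<in> Ore \<longleftrightarrow> (S :: 'a::ring_1 set) \<in> Ore"
  unfolding Ore_def using Ore_l_os Ore_r_os by blast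

theorem proposition1p4:
  shows "(LOre_l \<subseteq> (lL_l :: 'a::ring_1 set set) \<and> lL_l \<subseteq> (Lpl :: 'a set set) \<and>
          LOre_l = (lL_l \<inter> Ore_l :: 'a set set) \<and> lL_l \<inter> Ore_l = (Lpl \<inter> Ore_l :: 'a set set))
       \<and> (LOre_r \<subseteq> (rL_r :: 'a set set) \<and> rL_r \<subseteq> (Lpr :: 'a set set) \<and>
          LOre_r = (rL_r \<inter> Ore_r :: 'a set set) \<and> rL_r \<inter> Ore_r = (Lpr \<inter> Ore_r :: 'a set set))
       \<and> ((Ore :: 'a set set) \<subseteq> lrL_lr \<and> (lrL_lr :: 'a set set) \<subseteq> Lp)"
proof -
  have l1: "LOre_l \<subseteq> (lL_l :: 'a set set)" using LOre_sub_lL by blast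
  have l2: "lL_l \<subseteq> (Lpl :: 'a set set)" using lL_sub_Lpl by blast
  have r1: "LOre_r \<subseteq> (rL_r :: 'a set set)" using LOre_sub_lL LOre_os lL_os by blast
  have r2: "rL_r \<subseteq> (Lpr :: 'a set set)" using lL_sub_Lpl Lpl_os lL_os by blast
  have o1: "Ore \<subseteq> (lL_l :: 'a set set)" using Ore_sub_lL by blast
  have o2: "Ore \<subseteq> (rL_r :: 'a set set)" using Ore_sub_lL Ore_os lL_os by blast
  have L1: "LOre_l = (lL_l \<inter> Ore_l :: 'a set set)" using l1 l2 unfolding LOre_l_def Lpl_def by blast
  have L2: "lL_l \<inter> Ore_l = (Lpl \<inter> Ore_l :: 'a set set)" using l1 l2 unfolding LOre_l_def Lpl_def by blast
  have R1: "LOre_r = (rL_r \<inter> Ore_r :: 'a set set)" using r1 r2 unfolding LOre_r_def Lpr_def by blast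
  have R2: "rL_r \<inter> Ore_r = (Lpr \<inter> Ore_r :: 'a set set)" using r1 r2 unfolding LOre_r_def Lpr_def by blast
  have O1: "Ore \<subseteq> (lrL_lr :: 'a set set)" using o1 o2 unfolding lrL_lr_def by blast
  have O2: "lrL_lr \<subseteq> (Lp :: 'a set set)" using l2 r2 unfolding lrL_lr_def Lp_def Lpl_def Lpr_def L_def by blast
  show ?thesis using l1 l2 L1 L2 r1 r2 R1 R2 O1 O2 by blast
qed


end
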